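(* Let $N=3$ and let $a,b,\alpha,\beta\in\{1,\dots,8\}$ be four distinct indices such that, up to a phase, $U_a=U_b^\dagger$ and $U_\alpha=U_\beta^\dagger$. For $t_a,t_b,t_\alpha,t_\beta\ge0$ let $\Lambda=\exp(t_a\mathcal{L}_a+t_b\mathcal{L}_b+t_\alpha\mathcal{L}_\alpha+t_\beta\mathcal{L}_\beta)=\sum_{\mu=0}^8p_\mu U_\mu\otimes\overline{U}_\mu$. Then $\Lambda$ lies in the boundary of $\mathcal{A}_3^Q$, and its probability vector has product structure: there is a bijection $\sigma:\{0,\dots,8\}\to\{1,2,3\}^2$ such that $p_\mu=f_i(t_a,t_b)\,f_j(t_\alpha,t_\beta)$ whenever $\sigma(\mu)=(i,j)$, where, writing $E=e^{-\frac32(x+y)}$, $c=\cos[\frac{\sqrt3}2(x-y)]$, $s=\sin[\frac{\sqrt3}2(x-y)]$, $$f_1(x,y)=\tfrac13(1+2Ec),\quad f_2(x,y)=\tfrac13(1-Ec+\sqrt3Es),\quad f_3(x,y)=\tfrac13(1-Ec-\sqrt3Es).$$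
   Context: $\omega=e^{2\pi i/3}$, $X|j\rangle=|j\oplus1\rangle$ (addition mod 3), $Z=\mathrm{diag}(1,\omega,\omega^2)$, Weyl unitaries $U_{kl}=X^kZ^l$ indexed by $\mu=3k+l\in\{0,\dots,8\}$. Superoperators act on $|A\rangle\rangle=\sum A_{ij}|i\rangle|j\rangle$ ($\rho\mapsto K\rho K^\dagger$ corresponds to $K\otimes\overline K$). $\mathcal{L}_\mu=U_\mu\otimes\overline{U}_\mu-\mathbb{I}_9$, and $\mathcal{A}_3^Q$ is the set of $\exp(\sum_{\mu=1}^8t_\mu\mathcal{L}_\mu)$ with all $t_\mu\ge0$, viewed as a subset of the 8-simplex of Weyl channels $\sum_\mu p_\mu U_\mu\otimes\overline U_\mu$; boundary refers to this set within that simplex. *)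

theory Defs
  imports "HOL-Analysis.Analysis"
begin

text \<open>Square complex matrices are represented as functions nat => nat => complex;
  only the entries with indices below the relevant dimension matter.\<close>

type_synonym cmat = "nat \<Rightarrow> nat \<Rightarrow> complex"

definition mmul :: "nat \<Rightarrow> cmat \<Rightarrow> cmat \<Rightarrow> cmat" where
  "mmul n A B = (\<lambda>i j. \<Sum>k<n. A i k * B k j)"

definition midt :: cmat where
  "midt = (\<lambda>i j. if i = j then 1 else 0)"

fun mpow :: "nat \<Rightarrow> cmat \<Rightarrow> nat \<Rightarrow> cmat" where
  "mpow n A 0 = midt"
| "mpow n A (Suc m) = mmul n (mpow n A m) A"

definition mexp :: "nat \<Rightarrow> cmat \<Rightarrow> cmat" where
  "mexp n A = (\<lambda>i j. \<Sum>m. mpow n A m i j / of_nat (fact m))"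

definition meq :: "nat \<Rightarrow> cmat \<Rightarrow> cmat \<Rightarrow> bool" where
  "meq n A B = (\<forall>i<n. \<forall>j<n. A i j = B i j)"

definition adj :: "cmat \<Rightarrow> cmat" where
  "adj A = (\<lambda>i j. cnj (A j i))"

definition omega :: complex where
  "omega = cis (2 * pi / 3)"

definition Xop :: cmat where
  "Xop = (\<lambda>i j. if i = (j + 1) mod 3 then 1 else 0)"

definition Zop :: cmat where
  "Zop = (\<lambda>i j. if i = j then omega ^ i else 0)"

definition Weyl :: "nat \<Rightarrow> cmat" where
  "Weyl \<mu> = mmul 3 (mpow 3 Xop (\<mu> div 3)) (mpow 3 Zop (\<mu> mod 3))"

text \<open>Superoperator K \<otimes> conj K acting on |A>> = sum A_ij |i>|j>, basis index 3i+j.\<close>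
definition superop :: "cmat \<Rightarrow> cmat" where
  "superop K = (\<lambda>r c. K (r div 3) (c div 3) * cnj (K (r mod 3) (c mod 3)))"

definition Lgen :: "nat \<Rightarrow> cmat" where
  "Lgen \<mu> = (\<lambda>r c. superop (Weyl \<mu>) r c - midt r c)"

definition weyl_channel :: "(nat \<Rightarrow> real) \<Rightarrow> cmat" where
  "weyl_channel p = (\<lambda>r c. \<Sum>\<mu><9. complex_of_real (p \<mu>) * superop (Weyl \<mu>) r c)"

definition weyl_simplex :: "(nat \<Rightarrow> real) set" where
  "weyl_simplex = {p. (\<forall>\<mu>. 0 \<le> p \<mu>) \<and> (\<forall>\<mu>\<ge>9. p \<mu> = 0) \<and> (\<Sum>\<mu><9. p \<mu>) = 1}"

definition gen_comb :: "(nat \<Rightarrow> real) \<Rightarrow> cmat" where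
  "gen_comb t = (\<lambda>r c. \<Sum>\<mu>\<in>{1..8}. complex_of_real (t \<mu>) * Lgen \<mu> r c)"

definition AQ3 :: "(nat \<Rightarrow> real) set" where
  "AQ3 = {p \<in> weyl_simplex. \<exists>t::nat \<Rightarrow> real. (\<forall>\<mu>\<in>{1..8}. 0 \<le> t \<mu>)
            \<and> meq 9 (weyl_channel p) (mexp 9 (gen_comb t))}"

definition AQ3_boundary :: "(nat \<Rightarrow> real) set" where
  "AQ3_boundary = (top_of_set weyl_simplex) frontier_of AQ3"

definition fprob :: "nat \<Rightarrow> real \<Rightarrow> real \<Rightarrow> real" where
  "fprob i x y =
     (let E = exp (-(3/2) * (x + y));
          c = cos (sqrt 3 / 2 * (x - y));
          s = sin (sqrt 3 / 2 * (x - y))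
      in if i = 1 then (1 + 2 * E * c) / 3
         else if i = 2 then (1 - E * c + sqrt 3 * E * s) / 3
         else (1 - E * c - sqrt 3 * E * s) / 3)"

end

theory Submission
  imports Defs
begin


lemma Complex_sq [simp]: "(Complex a b)^2 = Complex (a*a-b*b) (2*a*b)"
  by (simp add: power2_eq_square complex_eq_iff)

lemma omega_alt: "omega = Complex (-1/2) (sqrt 3 / 2)"
  by (simp add: omega_def cis.ctr cos_120 sin_120)

lemma omega_sq: "omega ^ 2 = Complex (-1/2) (- sqrt 3 / 2)"
  by (simp add: omega_alt power2_eq_square complex_eq_iff)

lemma omega3: "omega ^ 3 = 1"
proof -
  have "omega ^ 3 = omega ^ 2 * omega" by (simp add: power3_eq_cube power2_eq_square)
  also have "\<dots> = 1" by (simp only: omega_sq omega_alt) (simp add: complex_eq_iff)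
  finally show ?thesis .
qed

lemma omega_pow_mod: "omega ^ n = omega ^ (n mod 3)"
proof -
  have "omega ^ n = omega ^ (3 * (n div 3) + n mod 3)" by (metis div_mult_mod_eq mult.commute)
  also have "\<dots> = omega ^ (n mod 3)" by (simp only: power_add power_mult omega3) simp
  finally show ?thesis .
qed

lemma omega_pow_cong: "x mod 3 = y mod 3 \<Longrightarrow> omega ^ x = omega ^ y"
  by (metis omega_pow_mod)

lemma cnj_omega: "cnj omega = omega ^ 2"
  by (simp add: omega_alt power2_eq_square complex_eq_iff)

lemma cnj_omega_pow: "cnj (omega ^ n) = omega ^ (2 * n)"
  by (simp add: cnj_omega power_mult)

lemma omega_ne1: "omega \<noteq> 1" by (simp add: omega_alt complex_eq_iff)
lemma omega2_ne1: "omega ^ 2 \<noteq> 1" by (simp add: omega_sq complex_eq_iff)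

lemma sum_omega: "1 + omega + omega ^ 2 = 0"
  by (simp only: omega_sq omega_alt) (simp add: complex_eq_iff)

lemma omega_pow_eq1_iff: "omega ^ n = 1 \<longleftrightarrow> n mod 3 = 0"
proof -
  have "n mod 3 < 3" by simp
  then have "n mod 3 = 0 \<or> n mod 3 = 1 \<or> n mod 3 = 2" by linarith
  then show ?thesis using omega_ne1 omega2_ne1
    by (metis omega_pow_mod power_0 power_one_right)
qed

lemma sum3_omega: "(\<Sum>l<3. omega ^ (l * m)) = (if m mod 3 = 0 then 3 else 0)"
proof -
  have e: "(\<Sum>l<3. omega ^ (l * m)) = 1 + omega ^ m + omega ^ (2*m)"
    by (simp add: numeral_3_eq_3 lessThan_Suc eval_nat_numeral)
  have "m mod 3 < 3" by simp
  then have "m mod 3 = 0 \<or> m mod 3 = 1 \<or> m mod 3 = 2" by linarith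
  moreover have "omega ^ (2*m) = omega ^ ((2 * (m mod 3)) mod 3)"
    by (metis omega_pow_mod mod_mult_right_eq)
  moreover have "omega ^ m = omega ^ (m mod 3)" by (rule omega_pow_mod)
  ultimately show ?thesis unfolding e using sum_omega omega3
    by (auto simp: algebra_simps power2_eq_square)
qed

lemma Re_omega_pow: "Re (omega ^ n) \<ge> -1/2"
proof -
  have "n mod 3 < 3" by simp
  then have "n mod 3 = 0 \<or> n mod 3 = 1 \<or> n mod 3 = 2" by linarith
  then show ?thesis
    by (subst omega_pow_mod) (auto simp only: omega_sq omega_alt power_0 power_one_right; simp)
qed

lemma Re_omega_pow_ne1: "n mod 3 \<noteq> 0 \<Longrightarrow> Re (omega ^ n) = -1/2"
proof -
  assume "n mod 3 \<noteq> 0"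
  have "n mod 3 < 3" by simp
  then have "n mod 3 = 1 \<or> n mod 3 = 2" using \<open>n mod 3 \<noteq> 0\<close> by linarith
  then show ?thesis
    by (subst omega_pow_mod) (auto simp only: omega_sq omega_alt power_0 power_one_right; simp)
qed

lemma norm_omega_pow: "cmod (omega ^ n) = 1"
  by (simp add: omega_def norm_power)



lemma sum3: "(\<Sum>a<3. f a) = f 0 + f 1 + f (2::nat)"
  by (simp add: eval_nat_numeral lessThan_Suc add_ac)


lemma sum9: "(\<Sum>c<9. f c) = (\<Sum>a<3. \<Sum>b<3. f (3*a+b::nat))"
proof -
  have "(\<Sum>c<9. f c) = (\<Sum>a<3. sum f {a*3..<a*3+3})" using sum.nat_group[of f 3 3] by simp
  also have "\<dots> = (\<Sum>a<3. \<Sum>b<3. f (3*a+b::nat))"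
  proof (rule sum.cong)
    fix a assume "a \<in> {..<(3::nat)}"
    have "sum f {0+a*3..<3+a*3} = (\<Sum>b=0..<3. f (b + a*3))" by (rule sum.shift_bounds_nat_ivl)
    then show "sum f {a*3..<a*3+3} = (\<Sum>b<3. f (3*a+b))"
      by (simp add: atLeast0LessThan add.commute mult.commute)
  qed simp
  finally show ?thesis .
qed

lemma lt3_cases: "(x::nat) < 3 \<Longrightarrow> x = 0 \<or> x = 1 \<or> x = 2" by linarith


lemma collapse3:
  fixes i k :: nat
  assumes "i < 3" "k < 3"
  shows "(\<Sum>a<3. if i = (a + k) mod 3 then g a else 0) = g ((i + 2*k) mod 3)"
  using lt3_cases[OF assms(1)] lt3_cases[OF assms(2)] by (elim disjE; simp add: sum3; simp add: numeral_2_eq_2)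


lemma mpowX: "i < 3 \<Longrightarrow> j < 3 \<Longrightarrow> mpow 3 Xop k i j = (if i = (j + k) mod 3 then 1 else 0)"
proof (induction k arbitrary: i j)
  case 0 then show ?case by (simp add: midt_def)
next
  case (Suc k)
  have "mpow 3 Xop (Suc k) i j = (\<Sum>m<3. (if i = (m + k) mod 3 then 1 else 0) * Xop m j)"
    using Suc by (simp add: mmul_def)
  also have "\<dots> = (\<Sum>m<3. if i = (m + k mod 3) mod 3 then Xop m j else 0)"
    by (rule sum.cong) (auto simp: mod_add_right_eq)
  also have "\<dots> = Xop ((i + 2*(k mod 3)) mod 3) j" by (rule collapse3) (use Suc in auto)
  also have "\<dots> = (if i = (j + Suc k) mod 3 then 1 else 0)"
  proof -
    have e1: "(j + Suc k) mod 3 = (j + 1 + k mod 3) mod 3" using mod_add_right_eq[of "j+1" k 3] by simp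
    have "((i + 2*x) mod 3 = (j+1) mod 3) = (i = (j + 1 + x) mod 3)" if "x < 3" for x
      using lt3_cases[OF Suc.prems(1)] lt3_cases[OF Suc.prems(2)] lt3_cases[OF that]
      by (elim disjE; simp)
    then have eq: "((i + 2*(k mod 3)) mod 3 = (j+1) mod 3) = (i = (j + Suc k) mod 3)"
      unfolding e1 by simp
    show ?thesis unfolding Xop_def using eq by simp
  qed
  finally show ?case .
qed

lemma mpowZ: "i < 3 \<Longrightarrow> j < 3 \<Longrightarrow> mpow 3 Zop l i j = (if i = j then omega ^ (i*l) else 0)"
proof (induction l arbitrary: i j)
  case 0 then show ?case by (simp add: midt_def)
next
  case (Suc l)
  have "mpow 3 Zop (Suc l) i j = (\<Sum>m<3. (if i = m then omega ^ (i*l) else 0) * Zop m j)"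
    using Suc by (simp add: mmul_def)
  also have "\<dots> = (\<Sum>m<3. if m = i then omega ^ (i*l) * Zop i j else 0)"
    by (rule sum.cong) auto
  also have "\<dots> = omega ^ (i*l) * Zop i j" using Suc.prems by simp
  also have "\<dots> = (if i = j then omega ^ (i * Suc l) else 0)"
    by (simp add: Zop_def power_add mult.commute)
  finally show ?case .
qed

lemma Weyl_eq: "i < 3 \<Longrightarrow> j < 3 \<Longrightarrow>
  Weyl \<mu> i j = (if i = (j + \<mu> div 3) mod 3 then omega ^ (\<mu> mod 3 * j) else 0)"
proof -
  assume ij: "i < 3" "j < 3"
  have "Weyl \<mu> i j = (\<Sum>m<3. (if i = (m + \<mu> div 3) mod 3 then 1 else 0) * (if m = j then omega ^ (m * (\<mu> mod 3)) else 0))"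
    unfolding Weyl_def mmul_def using ij by (intro sum.cong) (auto simp: mpowX mpowZ)
  also have "\<dots> = (\<Sum>m<3. if m = j then (if i = (j + \<mu> div 3) mod 3 then 1 else 0) * omega ^ (j * (\<mu> mod 3)) else 0)"
    by (rule sum.cong) auto
  also have "\<dots> = (if i = (j + \<mu> div 3) mod 3 then omega ^ (\<mu> mod 3 * j) else 0)"
    using ij by (simp add: mult.commute)
  finally show ?thesis .
qed



definition chi :: "nat \<Rightarrow> nat \<Rightarrow> complex" where
  "chi \<mu> \<nu> = omega ^ ((\<mu> mod 3 * (\<nu> div 3) + 2 * (\<mu> div 3) * (\<nu> mod 3)) mod 3)"

definition vv :: "nat \<Rightarrow> nat \<Rightarrow> complex" where
  "vv \<nu> c = Weyl \<nu> (c div 3) (c mod 3)"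

lemma phase_arith:
  fixes j k l k' l' :: nat
  assumes "j < 3" "k < 3" "l < 3" "k' < 3" "l' < 3"
  shows "(l*(((j+k') mod 3 + 2*k) mod 3) + 2*(l*((j+2*k) mod 3)) + l'*((j+2*k) mod 3)) mod 3
       = ((l*k' + 2*k*l') mod 3 + l'*j) mod 3"
  using lt3_cases[OF assms(1)] lt3_cases[OF assms(2)] lt3_cases[OF assms(3)]
    lt3_cases[OF assms(4)] lt3_cases[OF assms(5)]
  by (elim disjE; simp)

lemma cond_arith:
  fixes i j k k' :: nat
  assumes "i < 3" "j < 3" "k < 3" "k' < 3"
  shows "((i + 2*k) mod 3 = ((j + 2*k) mod 3 + k') mod 3) = (i = (j + k') mod 3)"
  using lt3_cases[OF assms(1)] lt3_cases[OF assms(2)] lt3_cases[OF assms(3)]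
    lt3_cases[OF assms(4)]
  by (elim disjE; simp)


lemma div3_lt: "(x::nat) < 9 \<Longrightarrow> x div 3 < 3" by simp

lemma F1:
  assumes "\<mu> < 9" "\<nu> < 9" "r < 9"
  shows "(\<Sum>c<9. superop (Weyl \<mu>) r c * vv \<nu> c) = chi \<mu> \<nu> * vv \<nu> r"
proof -
  define i where "i = r div 3"
  define j where "j = r mod 3"
  define k where "k = \<mu> div 3"
  define l where "l = \<mu> mod 3"
  define k' where "k' = \<nu> div 3"
  define l' where "l' = \<nu> mod 3"
  have lt: "i < 3" "j < 3" "k < 3" "l < 3" "k' < 3" "l' < 3"
    using assms unfolding i_def j_def k_def l_def k'_def l'_def by auto
  define a0 where "a0 = (i + 2*k) mod 3"
  define b0 where "b0 = (j + 2*k) mod 3"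
  have W: "\<And>x y. x < 3 \<Longrightarrow> y < 3 \<Longrightarrow> Weyl \<mu> x y = (if x = (y + k) mod 3 then omega ^ (l * y) else 0)"
    by (simp add: Weyl_eq k_def l_def)
  have Wn: "\<And>x y. x < 3 \<Longrightarrow> y < 3 \<Longrightarrow> Weyl \<nu> x y = (if x = (y + k') mod 3 then omega ^ (l' * y) else 0)"
    by (simp add: Weyl_eq k'_def l'_def)
  have "(\<Sum>c<9. superop (Weyl \<mu>) r c * vv \<nu> c)
      = (\<Sum>a<3. \<Sum>b<3. Weyl \<mu> i a * cnj (Weyl \<mu> j b) * Weyl \<nu> a b)"
    unfolding sum9 superop_def vv_def i_def j_def
    by (intro sum.cong refl) (simp add: algebra_simps)
  also have "\<dots> = (\<Sum>a<3. if i = (a + k) mod 3 then omega ^ (l * a) * (\<Sum>b<3. cnj (Weyl \<mu> j b) * Weyl \<nu> a b) else 0)"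
    by (intro sum.cong refl) (simp add: W lt sum_distrib_left mult.assoc)
  also have "\<dots> = omega ^ (l * a0) * (\<Sum>b<3. cnj (Weyl \<mu> j b) * Weyl \<nu> a0 b)"
    unfolding a0_def by (rule collapse3) (use lt in auto)
  also have "(\<Sum>b<3. cnj (Weyl \<mu> j b) * Weyl \<nu> a0 b)
      = (\<Sum>b<3. if j = (b + k) mod 3 then cnj (omega ^ (l * b)) * Weyl \<nu> a0 b else 0)"
    by (intro sum.cong refl) (simp add: W lt)
  also have "\<dots> = cnj (omega ^ (l * b0)) * Weyl \<nu> a0 b0"
    unfolding b0_def by (rule collapse3) (use lt in auto)
  finally have L: "(\<Sum>c<9. superop (Weyl \<mu>) r c * vv \<nu> c)
      = omega ^ (l * a0) * (cnj (omega ^ (l * b0)) * Weyl \<nu> a0 b0)" .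
  have a0b0: "a0 < 3" "b0 < 3" unfolding a0_def b0_def by auto
  have R: "chi \<mu> \<nu> * vv \<nu> r = omega ^ ((l*k' + 2*k*l') mod 3) * (if i = (j + k') mod 3 then omega ^ (l' * j) else 0)"
    unfolding chi_def vv_def by (simp add: Wn lt i_def[symmetric] j_def[symmetric] k_def l_def k'_def l'_def mult.assoc)
  show ?thesis
  proof (cases "i = (j + k') mod 3")
    case True
    have c: "a0 = (b0 + k') mod 3" unfolding a0_def b0_def using cond_arith[OF lt(1,2,3,5)] True by simp
    have "omega ^ (l * a0) * (cnj (omega ^ (l * b0)) * omega ^ (l' * b0))
        = omega ^ (l * a0 + 2 * (l * b0) + l' * b0)"
      by (simp only: cnj_omega_pow) (simp add: power_add)
    also have "\<dots> = omega ^ ((l*k' + 2*k*l') mod 3 + l' * j)"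
      apply (rule omega_pow_cong)
      unfolding a0_def b0_def True using phase_arith[OF lt(2,3,4,5,6)] by simp
    finally show ?thesis unfolding L R using True c a0b0 by (simp add: Wn power_add)
  next
    case False
    have c: "a0 \<noteq> (b0 + k') mod 3" unfolding a0_def b0_def using cond_arith[OF lt(1,2,3,5)] False by simp
    show ?thesis unfolding L R using False c a0b0 by (simp add: Wn)
  qed
qed


lemma om_mul_cnj: "omega ^ x * cnj (omega ^ y) = omega ^ (x + 2 * y)"
  by (simp only: cnj_omega_pow power_add)

lemma cond2_arith:
  fixes i1 i2 j1 j2 :: nat
  assumes "i1 < 3" "i2 < 3" "j1 < 3" "j2 < 3"
  shows "(j1 = (j2 + (i1 + 2*i2) mod 3) mod 3 \<and> (i2 + 2*j2) mod 3 = 0) = (i1 = j1 \<and> i2 = j2)"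
  using lt3_cases[OF assms(1)] lt3_cases[OF assms(2)] lt3_cases[OF assms(3)]
    lt3_cases[OF assms(4)]
  by (elim disjE; simp)

lemma F2:
  assumes "i < 9" "j < 9"
  shows "(\<Sum>\<nu><9. vv \<nu> i * cnj (vv \<nu> j)) = (if i = j then 3 else 0)"
proof -
  define i1 where "i1 = i div 3"
  define i2 where "i2 = i mod 3"
  define j1 where "j1 = j div 3"
  define j2 where "j2 = j mod 3"
  have lt: "i1 < 3" "i2 < 3" "j1 < 3" "j2 < 3" using assms unfolding i1_def i2_def j1_def j2_def by auto
  have "(\<Sum>\<nu><9. vv \<nu> i * cnj (vv \<nu> j))
     = (\<Sum>k'<3. \<Sum>l'<3. (if i1 = (k' + i2) mod 3 then (if j1 = (j2 + k') mod 3 then omega^(l' * (i2 + 2*j2)) else 0) else 0))"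
    unfolding sum9
  proof (intro sum.cong refl)
    fix k' l' assume "k' \<in> {..<3::nat}" "l' \<in> {..<3::nat}"
    then have d: "(3*k'+l') div 3 = k'" "(3*k'+l') mod 3 = l'" "l' div 3 = 0" "l' mod 3 = l'" by auto
    have e: "omega ^ (l' * i2) * cnj (omega ^ (l' * j2)) = omega^(l' * (i2 + 2*j2))"
      by (simp only: om_mul_cnj) (simp add: algebra_simps)
    show "vv (3 * k' + l') i * cnj (vv (3 * k' + l') j) =
      (if i1 = (k' + i2) mod 3 then (if j1 = (j2 + k') mod 3 then omega^(l' * (i2 + 2*j2)) else 0) else 0)"
      unfolding vv_def i1_def[symmetric] i2_def[symmetric] j1_def[symmetric] j2_def[symmetric]
      using lt e by (simp add: Weyl_eq d add.commute)
  qed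
  also have "\<dots> = (\<Sum>k'<3. (if i1 = (k' + i2) mod 3 then (if j1 = (j2 + k') mod 3 then (if (i2 + 2*j2) mod 3 = 0 then 3 else 0) else 0) else 0))"
    by (intro sum.cong refl) (simp add: sum3_omega)
  also have "\<dots> = (if j1 = (j2 + (i1 + 2*i2) mod 3) mod 3 then (if (i2 + 2*j2) mod 3 = 0 then 3 else 0) else 0)"
    by (rule collapse3) (use lt in auto)
  also have "\<dots> = (if i = j then 3 else 0)"
  proof -
    have "(i = j) = (i1 = j1 \<and> i2 = j2)" unfolding i1_def i2_def j1_def j2_def
      by (metis div_mult_mod_eq)
    then show ?thesis using cond2_arith[OF lt] by auto
  qed
  finally show ?thesis .
qed




lemma chi_alt: "chi \<mu> \<nu> = omega ^ (\<mu> mod 3 * (\<nu> div 3) + 2 * (\<mu> div 3) * (\<nu> mod 3))"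
  unfolding chi_def by (rule omega_pow_mod[symmetric])

lemma sum_chi_gen: "(\<Sum>\<mu><9. omega ^ (\<mu> mod 3 * A + \<mu> div 3 * B)) = (if A mod 3 = 0 \<and> B mod 3 = 0 then 9 else 0)"
proof -
  have "(\<Sum>\<mu><9. omega ^ (\<mu> mod 3 * A + \<mu> div 3 * B)) = (\<Sum>k<3. \<Sum>l<3. omega ^ (l * A) * omega ^ (k * B))"
    unfolding sum9 by (intro sum.cong refl) (auto simp: power_add)
  also have "\<dots> = (\<Sum>l<3. omega ^ (l * A)) * (\<Sum>k<3. omega ^ (k * B))"
    by (simp add: sum_product mult.commute sum_distrib_left)
  also have "\<dots> = (if A mod 3 = 0 \<and> B mod 3 = 0 then 9 else 0)" by (simp add: sum3_omega)
  finally show ?thesis .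
qed

lemma cnj_chi: "cnj (chi \<mu> \<nu>) = omega ^ (2 * (\<mu> mod 3 * (\<nu> div 3) + 2 * (\<mu> div 3) * (\<nu> mod 3)))"
  unfolding chi_alt by (rule cnj_omega_pow)

lemma lt9_cases: "(x::nat) < 9 \<Longrightarrow> x=0 \<or> x=1 \<or> x=2 \<or> x=3 \<or> x=4 \<or> x=5 \<or> x=6 \<or> x=7 \<or> x=8" by linarith




lemma orth_cond1a:
  fixes k1 l1 k2 l2 :: nat
  assumes "k1 < 3" "l1 < 3" "k2 < 3" "l2 < 3"
  shows "((2 * k1 + k2) mod 3 = 0 \<and> (4 * l1 + 2 * l2) mod 3 = 0) = (k1 = k2 \<and> l1 = l2)"
  using lt3_cases[OF assms(1)] lt3_cases[OF assms(2)] lt3_cases[OF assms(3)] lt3_cases[OF assms(4)]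
  by (elim disjE; simp)

lemma orth_cond2a:
  fixes k1 l1 k2 l2 :: nat
  assumes "k1 < 3" "l1 < 3" "k2 < 3" "l2 < 3"
  shows "((k1 + k2) mod 3 = 0 \<and> (2 * l1 + 2 * l2) mod 3 = 0) = (k2 = (3 - k1) mod 3 \<and> l2 = (3 - l1) mod 3)"
  using lt3_cases[OF assms(1)] lt3_cases[OF assms(2)] lt3_cases[OF assms(3)] lt3_cases[OF assms(4)]
  by (elim disjE; simp)

lemma nat_eq_divmod3: "((x::nat) = y) = (x div 3 = y div 3 \<and> x mod 3 = y mod 3)"
  by (metis div_mult_mod_eq)

lemma orth_cond1:
  fixes \<nu>1 \<nu>2 :: nat
  assumes "\<nu>1 < 9" "\<nu>2 < 9"
  shows "((2 * (\<nu>1 div 3) + \<nu>2 div 3) mod 3 = 0 \<and> (4 * (\<nu>1 mod 3) + 2 * (\<nu>2 mod 3)) mod 3 = 0) = (\<nu>1 = \<nu>2)"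
  using orth_cond1a[of "\<nu>1 div 3" "\<nu>1 mod 3" "\<nu>2 div 3" "\<nu>2 mod 3"] assms
  by (simp add: nat_eq_divmod3[of \<nu>1 \<nu>2])

definition gneg :: "nat \<Rightarrow> nat" where
  "gneg \<nu> = 3 * ((3 - \<nu> div 3) mod 3) + (3 - \<nu> mod 3) mod 3"

lemma gneg_div: "gneg \<nu> div 3 = (3 - \<nu> div 3) mod 3" unfolding gneg_def by simp
lemma gneg_mod: "gneg \<nu> mod 3 = (3 - \<nu> mod 3) mod 3" unfolding gneg_def by simp

lemma orth_cond2:
  fixes \<nu>1 \<nu>2 :: nat
  assumes "\<nu>1 < 9" "\<nu>2 < 9"
  shows "((\<nu>1 div 3 + \<nu>2 div 3) mod 3 = 0 \<and> (2 * (\<nu>1 mod 3) + 2 * (\<nu>2 mod 3)) mod 3 = 0) = (\<nu>2 = gneg \<nu>1)"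
  using orth_cond2a[of "\<nu>1 div 3" "\<nu>1 mod 3" "\<nu>2 div 3" "\<nu>2 mod 3"] assms
  by (simp add: nat_eq_divmod3[of \<nu>2 "gneg \<nu>1"] gneg_div gneg_mod)

lemma orth1:
  assumes "\<nu>1 < 9" "\<nu>2 < 9"
  shows "(\<Sum>\<mu><9. cnj (chi \<mu> \<nu>1) * chi \<mu> \<nu>2) = (if \<nu>1 = \<nu>2 then 9 else 0)"
proof -
  have "(\<Sum>\<mu><9. cnj (chi \<mu> \<nu>1) * chi \<mu> \<nu>2) = (\<Sum>\<mu><9. omega ^ (\<mu> mod 3 * (2 * (\<nu>1 div 3) + \<nu>2 div 3) + \<mu> div 3 * (4 * (\<nu>1 mod 3) + 2 * (\<nu>2 mod 3))))"
    unfolding cnj_chi unfolding chi_alt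
    by (intro sum.cong refl, simp only: power_add[symmetric], rule arg_cong[where f="\<lambda>n. omega ^ n"]) (simp add: algebra_simps)
  then show ?thesis using orth_cond1[OF assms] by (simp add: sum_chi_gen)
qed

lemma orth2:
  assumes "\<nu>1 < 9" "\<nu>2 < 9"
  shows "(\<Sum>\<mu><9. chi \<mu> \<nu>1 * chi \<mu> \<nu>2) = (if \<nu>2 = gneg \<nu>1 then 9 else 0)"
proof -
  have "(\<Sum>\<mu><9. chi \<mu> \<nu>1 * chi \<mu> \<nu>2) = (\<Sum>\<mu><9. omega ^ (\<mu> mod 3 * (\<nu>1 div 3 + \<nu>2 div 3) + \<mu> div 3 * (2 * (\<nu>1 mod 3) + 2 * (\<nu>2 mod 3))))"
    unfolding chi_alt
    by (intro sum.cong refl, simp only: power_add[symmetric], rule arg_cong[where f="\<lambda>n. omega ^ n"]) (simp add: algebra_simps)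
  then show ?thesis using orth_cond2[OF assms] by (simp add: sum_chi_gen)
qed

lemma chi0_right [simp]: "chi \<mu> 0 = 1" by (simp add: chi_def)
lemma chi0_left [simp]: "chi 0 \<nu> = 1" by (simp add: chi_def)

lemma chi_sum1:
  assumes "\<nu> < 9" shows "(\<Sum>\<mu><9. chi \<mu> \<nu>) = (if \<nu> = 0 then 9 else 0)"
  using orth1[OF _ assms, of 0] by simp

lemma chi_swap: "chi \<mu> \<nu> = cnj (chi \<nu> \<mu>)"
proof -
  define X where "X = \<nu> mod 3 * (\<mu> div 3) + 2 * (\<nu> div 3) * (\<mu> mod 3)"
  define Y where "Y = \<mu> mod 3 * (\<nu> div 3) + 2 * (\<mu> div 3) * (\<nu> mod 3)"
  have e: "2 * X = Y + 3 * ((\<nu> div 3) * (\<mu> mod 3))"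
    unfolding X_def Y_def by (simp add: algebra_simps)
  have "(2 * (X mod 3)) mod 3 = (2 * X) mod 3" by (simp add: mod_mult_right_eq)
  also have "\<dots> = Y mod 3" unfolding e by simp
  finally have "omega ^ (Y mod 3) = omega ^ (2 * (X mod 3))" by (intro omega_pow_cong) simp
  then show ?thesis unfolding chi_def cnj_omega_pow X_def Y_def .
qed

lemma chi_sum2:
  assumes "\<mu> < 9" shows "(\<Sum>\<nu><9. chi \<mu> \<nu>) = (if \<mu> = 0 then 9 else 0)"
proof -
  have "(\<Sum>\<nu><9. chi \<mu> \<nu>) = (\<Sum>\<nu><9. cnj (chi \<nu> \<mu>))" by (rule sum.cong, rule refl, rule chi_swap)
  also have "\<dots> = cnj (\<Sum>\<nu><9. chi \<nu> \<mu>)" by simp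
  finally show ?thesis using chi_sum1[OF assms] by simp
qed

lemma gneg_arith:
  fixes k l k' l' :: nat
  assumes "k < 3" "l < 3" "k' < 3" "l' < 3"
  shows "(l * ((3 - k') mod 3) + 2 * k * ((3 - l') mod 3)) mod 3 = (2 * (l * k' + 2 * k * l')) mod 3"
  using lt3_cases[OF assms(1)] lt3_cases[OF assms(2)] lt3_cases[OF assms(3)] lt3_cases[OF assms(4)]
  by (elim disjE; simp)

lemma chi_gneg: "\<mu> < 9 \<Longrightarrow> \<nu> < 9 \<Longrightarrow> chi \<mu> (gneg \<nu>) = cnj (chi \<mu> \<nu>)"
  unfolding chi_def cnj_omega_pow
  apply (rule omega_pow_cong)
  unfolding mod_mult_right_eq mod_mod_trivial
  using gneg_arith[of "\<mu> div 3" "\<mu> mod 3" "\<nu> div 3" "\<nu> mod 3"]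
  by (simp add: gneg_div gneg_mod)

lemma gneg_facts:
  assumes "\<nu> < 9" "\<nu> \<noteq> 0" shows "gneg \<nu> < 9" "gneg \<nu> \<noteq> \<nu>" "gneg \<nu> \<noteq> 0"
proof -
  show "gneg \<nu> < 9" unfolding gneg_def by simp
  show "gneg \<nu> \<noteq> \<nu>" "gneg \<nu> \<noteq> 0" using lt9_cases[OF assms(1)] assms(2)
    by (elim disjE; simp add: gneg_def)+
qed




definition mv :: "nat \<Rightarrow> cmat \<Rightarrow> (nat \<Rightarrow> complex) \<Rightarrow> nat \<Rightarrow> complex" where
  "mv n A v = (\<lambda>i. \<Sum>j<n. A i j * v j)"

lemma mv_midt: "i < n \<Longrightarrow> mv n midt v i = v i"
proof -
  assume "i < n"
  have "mv n midt v i = (\<Sum>j<n. if i = j then v j else 0)"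
    unfolding mv_def midt_def by (rule sum.cong) auto
  then show ?thesis using \<open>i < n\<close> by simp
qed

lemma mpow_eigen:
  assumes "\<And>i. i < n \<Longrightarrow> mv n A v i = c * v i" "i < n"
  shows "mv n (mpow n A m) v i = c ^ m * v i"
  using assms(2)
proof (induction m arbitrary: i)
  case 0 then show ?case by (simp add: mv_midt)
next
  case (Suc m)
  have "mv n (mpow n A (Suc m)) v i = (\<Sum>j<n. \<Sum>k<n. mpow n A m i k * (A k j * v j))"
    by (simp add: mv_def mmul_def sum_distrib_right mult.assoc)
  also have "\<dots> = (\<Sum>k<n. \<Sum>j<n. mpow n A m i k * (A k j * v j))" by (rule sum.swap)
  also have "\<dots> = (\<Sum>k<n. mpow n A m i k * mv n A v k)"
    by (simp add: mv_def sum_distrib_left)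
  also have "\<dots> = (\<Sum>k<n. mpow n A m i k * (c * v k))"
    by (intro sum.cong refl) (simp add: assms(1))
  also have "\<dots> = c * mv n (mpow n A m) v i"
    by (simp add: mv_def sum_distrib_left algebra_simps)
  also have "\<dots> = c ^ Suc m * v i" using Suc by simp
  finally show ?case .
qed

lemma mpow_bound:
  assumes "\<And>i j. i < n \<Longrightarrow> j < n \<Longrightarrow> cmod (A i j) \<le> K" "0 \<le> K" "i < n" "j < n"
  shows "cmod (mpow n A m i j) \<le> (real n * K) ^ m"
  using assms(3,4)
proof (induction m arbitrary: i j)
  case 0 then show ?case by (simp add: midt_def)
next
  case (Suc m)
  have "cmod (mpow n A (Suc m) i j) = cmod (\<Sum>k<n. mpow n A m i k * A k j)" by (simp add: mmul_def)
  also have "\<dots> \<le> (\<Sum>k<n. cmod (mpow n A m i k * A k j))" by (rule norm_sum)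
  also have "\<dots> \<le> (\<Sum>k<n. (real n * K) ^ m * K)"
  proof (intro sum_mono)
    fix k assume "k \<in> {..<n}"
    then have "k < n" by simp
    show "cmod (mpow n A m i k * A k j) \<le> (real n * K) ^ m * K"
      unfolding norm_mult
      by (intro mult_mono Suc.IH Suc.prems assms(1) \<open>k < n\<close>) (auto simp: assms(2))
  qed
  also have "\<dots> = (real n * K) ^ Suc m" by simp
  finally show ?case .
qed

lemma mpow_summable:
  assumes "i < n" "j < n"
  shows "summable (\<lambda>m. mpow n A m i j / of_nat (fact m))"
proof -
  define K where "K = (\<Sum>i<n. \<Sum>j<n. cmod (A i j))"
  have K0: "0 \<le> K" unfolding K_def by (intro sum_nonneg) auto
  have KA: "cmod (A i j) \<le> K" if "i < n" "j < n" for i j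
  proof -
    have "cmod (A i j) \<le> (\<Sum>j<n. cmod (A i j))" using that by (intro member_le_sum) auto
    also have "\<dots> \<le> K" unfolding K_def using that by (intro member_le_sum[where f="\<lambda>i. \<Sum>j<n. cmod (A i j)"]) (auto intro: sum_nonneg)
    finally show ?thesis .
  qed
  show ?thesis
  proof (rule summable_comparison_test)
    show "\<exists>N. \<forall>m\<ge>N. norm (mpow n A m i j / of_nat (fact m)) \<le> (real n * K) ^ m / fact m"
      using mpow_bound[OF KA K0 assms] by (auto simp: norm_divide divide_right_mono)
    show "summable (\<lambda>m. (real n * K) ^ m / fact m)"
      using summable_exp[of "real n * K"] by (simp add: divide_inverse mult.commute)
  qed
qed

lemma mexp_eigen:
  assumes "\<And>i. i < n \<Longrightarrow> mv n A v i = c * v i" "i < n"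
  shows "mv n (mexp n A) v i = exp c * v i"
proof -
  have "mv n (mexp n A) v i = (\<Sum>j<n. \<Sum>m. mpow n A m i j / of_nat (fact m) * v j)"
    unfolding mv_def mexp_def
  proof (intro sum.cong refl)
    fix j assume "j \<in> {..<n}"
    then have "j < n" by simp
    show "(\<Sum>m. mpow n A m i j / of_nat (fact m)) * v j = (\<Sum>m. mpow n A m i j / of_nat (fact m) * v j)"
      by (rule suminf_mult2[OF mpow_summable[OF assms(2) \<open>j < n\<close>]])
  qed
  also have "\<dots> = (\<Sum>m. \<Sum>j<n. mpow n A m i j / of_nat (fact m) * v j)"
    by (rule suminf_sum[symmetric]) (intro summable_mult2 mpow_summable assms, simp)
  also have "\<dots> = (\<Sum>m. (c ^ m / of_nat (fact m)) * v i)"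
  proof (intro suminf_cong)
    fix m
    have "(\<Sum>j<n. mpow n A m i j / of_nat (fact m) * v j) = mv n (mpow n A m) v i / of_nat (fact m)"
      by (simp add: mv_def sum_divide_distrib algebra_simps)
    also have "\<dots> = (c ^ m / of_nat (fact m)) * v i" using mpow_eigen[OF assms] by simp
    finally show "(\<Sum>j<n. mpow n A m i j / of_nat (fact m) * v j) = (c ^ m / of_nat (fact m)) * v i" .
  qed
  also have "\<dots> = exp c * v i"
  proof -
    have "(\<lambda>m. c ^ m /\<^sub>R fact m) sums exp c" by (rule exp_converges)
    then have "(\<lambda>m. c ^ m / of_nat (fact m)) sums exp c"
      by (simp add: scaleR_conv_of_real divide_inverse mult.commute)
    then have "(\<lambda>m. (c ^ m / of_nat (fact m)) * v i) sums (exp c * v i)" by (rule sums_mult2)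
    then show ?thesis by (rule sums_unique[symmetric])
  qed
  finally show ?thesis .
qed


lemma mv_sum: "mv n (\<lambda>r c. \<Sum>\<mu>\<in>I. f \<mu> * B \<mu> r c) v i = (\<Sum>\<mu>\<in>I. f \<mu> * mv n (B \<mu>) v i)"
proof -
  have "mv n (\<lambda>r c. \<Sum>\<mu>\<in>I. f \<mu> * B \<mu> r c) v i = (\<Sum>j<n. \<Sum>\<mu>\<in>I. f \<mu> * (B \<mu> i j * v j))"
    by (simp add: mv_def sum_distrib_right mult.assoc)
  also have "\<dots> = (\<Sum>\<mu>\<in>I. \<Sum>j<n. f \<mu> * (B \<mu> i j * v j))" by (rule sum.swap)
  also have "\<dots> = (\<Sum>\<mu>\<in>I. f \<mu> * mv n (B \<mu>) v i)" by (simp add: mv_def sum_distrib_left)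
  finally show ?thesis .
qed

lemma mv_add: "mv n (\<lambda>r c. X r c + Y r c) v i = mv n X v i + mv n Y v i"
  by (simp add: mv_def distrib_right sum.distrib)

lemma mv_diff: "mv n (\<lambda>r c. X r c - Y r c) v i = mv n X v i - mv n Y v i"
  by (simp add: mv_def left_diff_distrib sum_subtractf)

lemma mv_scale: "mv n (\<lambda>r c. a * X r c) v i = a * mv n X v i"
  by (simp add: mv_def sum_distrib_left mult.assoc)

definition lam :: "(nat \<Rightarrow> real) \<Rightarrow> nat \<Rightarrow> complex" where
  "lam p \<nu> = (\<Sum>\<mu><9. complex_of_real (p \<mu>) * chi \<mu> \<nu>)"

definition ell :: "(nat \<Rightarrow> real) \<Rightarrow> nat \<Rightarrow> complex" where
  "ell t \<nu> = (\<Sum>\<mu>\<in>{1..8}. complex_of_real (t \<mu>) * (chi \<mu> \<nu> - 1))"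

lemma mv_superop: "\<mu> < 9 \<Longrightarrow> \<nu> < 9 \<Longrightarrow> i < 9 \<Longrightarrow> mv 9 (superop (Weyl \<mu>)) (vv \<nu>) i = chi \<mu> \<nu> * vv \<nu> i"
  unfolding mv_def by (rule F1)

lemma mv_weyl_channel: "\<nu> < 9 \<Longrightarrow> i < 9 \<Longrightarrow> mv 9 (weyl_channel p) (vv \<nu>) i = lam p \<nu> * vv \<nu> i"
  unfolding weyl_channel_def mv_sum lam_def sum_distrib_right
  by (intro sum.cong refl) (simp add: mv_superop mult.assoc)

lemma mv_Lgen: "\<mu> < 9 \<Longrightarrow> \<nu> < 9 \<Longrightarrow> i < 9 \<Longrightarrow> mv 9 (Lgen \<mu>) (vv \<nu>) i = (chi \<mu> \<nu> - 1) * vv \<nu> i"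
  unfolding Lgen_def mv_diff by (simp add: mv_superop mv_midt algebra_simps)

lemma mv_gen_comb: "\<nu> < 9 \<Longrightarrow> i < 9 \<Longrightarrow> mv 9 (gen_comb t) (vv \<nu>) i = ell t \<nu> * vv \<nu> i"
  unfolding gen_comb_def mv_sum ell_def sum_distrib_right
  by (intro sum.cong refl) (simp add: mv_Lgen mult.assoc)

lemma vv_base: "\<nu> < 9 \<Longrightarrow> vv \<nu> (3 * (\<nu> div 3)) = 1"
  unfolding vv_def by (simp add: Weyl_eq)

lemma meq_mv: "meq n A B \<Longrightarrow> i < n \<Longrightarrow> mv n A v i = mv n B v i"
  unfolding meq_def mv_def by (intro sum.cong refl) auto

lemma EIG:
  assumes "meq 9 (weyl_channel q) (mexp 9 (gen_comb t))" "\<nu> < 9"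
  shows "lam q \<nu> = exp (ell t \<nu>)"
proof -
  define i where "i = 3 * (\<nu> div 3)"
  have i: "i < 9" using assms(2) unfolding i_def by simp
  have "lam q \<nu> * vv \<nu> i = mv 9 (weyl_channel q) (vv \<nu>) i" using mv_weyl_channel[OF assms(2) i] by simp
  also have "\<dots> = mv 9 (mexp 9 (gen_comb t)) (vv \<nu>) i" by (rule meq_mv[OF assms(1) i])
  also have "\<dots> = exp (ell t \<nu>) * vv \<nu> i" by (rule mexp_eigen[OF mv_gen_comb[OF assms(2)] i])
  finally show ?thesis using vv_base[OF assms(2)] unfolding i_def by simp
qed

lemma DET:
  assumes "\<And>\<nu> i. \<nu> < 9 \<Longrightarrow> i < 9 \<Longrightarrow> mv 9 A (vv \<nu>) i = mv 9 B (vv \<nu>) i"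
  shows "meq 9 A B"
  unfolding meq_def
proof (intro allI impI)
  fix i j assume ij: "i < (9::nat)" "j < (9::nat)"
  have key: "3 * X i j = (\<Sum>\<nu><9. mv 9 X (vv \<nu>) i * cnj (vv \<nu> j))" for X
  proof -
    have "(\<Sum>\<nu><9. mv 9 X (vv \<nu>) i * cnj (vv \<nu> j)) = (\<Sum>\<nu><9. \<Sum>c<9. X i c * (vv \<nu> c * cnj (vv \<nu> j)))"
      by (simp add: mv_def sum_distrib_right mult.assoc)
    also have "\<dots> = (\<Sum>c<9. \<Sum>\<nu><9. X i c * (vv \<nu> c * cnj (vv \<nu> j)))" by (rule sum.swap)
    also have "\<dots> = (\<Sum>c<9. X i c * (if c = j then 3 else 0))"
      by (intro sum.cong refl) (simp add: sum_distrib_left[symmetric] F2 ij)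
    also have "\<dots> = 3 * X i j" using ij by (simp add: if_distrib cong: if_cong)
    finally show ?thesis by simp
  qed
  have "3 * A i j = 3 * B i j" unfolding key using assms ij by simp
  then show "A i j = B i j" by simp
qed


definition Aterm :: "nat \<Rightarrow> real \<Rightarrow> nat \<Rightarrow> real" where
  "Aterm r x n = (if n mod 3 = r then x ^ n / fact n else 0)"

definition Ar :: "nat \<Rightarrow> real \<Rightarrow> real" where
  "Ar r x = (\<Sum>n. Aterm r x n)"

lemma Aterm_summable: "summable (Aterm r x)"
proof (rule summable_comparison_test)
  show "\<exists>N. \<forall>n\<ge>N. norm (Aterm r x n) \<le> \<bar>x\<bar> ^ n / fact n"
    by (auto simp: Aterm_def abs_mult power_abs)
  show "summable (\<lambda>n. \<bar>x\<bar> ^ n / fact n)"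
    using summable_exp[of "\<bar>x\<bar>"] by (simp add: divide_inverse mult.commute)
qed

lemma Ar_nonneg: "0 \<le> x \<Longrightarrow> 0 \<le> Ar r x"
  unfolding Ar_def by (intro suminf_nonneg Aterm_summable) (simp add: Aterm_def)

lemma pow_mod3: "(w::complex) ^ 3 = 1 \<Longrightarrow> w ^ n = w ^ (n mod 3)"
proof -
  assume w: "w ^ 3 = 1"
  have "w ^ n = w ^ (3 * (n div 3) + n mod 3)" by (metis div_mult_mod_eq mult.commute)
  also have "\<dots> = w ^ (n mod 3)" by (simp only: power_add power_mult w) simp
  finally show ?thesis .
qed

lemma exp_decomp:
  assumes w: "w ^ 3 = 1"
  shows "exp (w * complex_of_real x) = (\<Sum>r<3. w ^ r * complex_of_real (Ar r x))"
proof -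
  have s1: "(\<lambda>n. (w * complex_of_real x) ^ n /\<^sub>R fact n) sums exp (w * complex_of_real x)"
    by (rule exp_converges)
  have s2: "(\<lambda>n. \<Sum>r<3. w ^ r * complex_of_real (Aterm r x n)) sums (\<Sum>r<3. w ^ r * complex_of_real (Ar r x))"
    unfolding Ar_def
    by (intro sums_sum sums_mult sums_of_real summable_sums Aterm_summable)
  have eq: "(w * complex_of_real x) ^ n /\<^sub>R fact n = (\<Sum>r<3. w ^ r * complex_of_real (Aterm r x n))" for n
  proof -
    have "(\<Sum>r<3. w ^ r * complex_of_real (Aterm r x n)) = (\<Sum>r<3. if r = n mod 3 then w ^ (n mod 3) * complex_of_real (x ^ n / fact n) else 0)"
      by (intro sum.cong refl) (auto simp: Aterm_def)
    also have "\<dots> = w ^ (n mod 3) * complex_of_real (x ^ n / fact n)" by simp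
    also have "\<dots> = (w * complex_of_real x) ^ n /\<^sub>R fact n"
      using pow_mod3[OF w, of n] by (simp add: scaleR_conv_of_real power_mult_distrib divide_inverse)
    finally show ?thesis by simp
  qed
  show ?thesis using s1 s2 unfolding eq by (rule sums_unique2)
qed

definition gg :: "nat \<Rightarrow> real \<Rightarrow> real \<Rightarrow> real" where
  "gg j x y = exp (-(x+y)) *
     (if j = 0 then Ar 0 x * Ar 0 y + Ar 1 x * Ar 1 y + Ar 2 x * Ar 2 y
      else if j = 1 then Ar 1 x * Ar 0 y + Ar 2 x * Ar 1 y + Ar 0 x * Ar 2 y
      else Ar 2 x * Ar 0 y + Ar 0 x * Ar 1 y + Ar 1 x * Ar 2 y)"

lemma gg_nonneg: "0 \<le> x \<Longrightarrow> 0 \<le> y \<Longrightarrow> 0 \<le> gg j x y"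
  unfolding gg_def by (intro mult_nonneg_nonneg) (auto intro!: add_nonneg_nonneg mult_nonneg_nonneg Ar_nonneg)

lemma poly_wu:
  fixes w u a0 a1 a2 b0 b1 b2 :: complex
  assumes "w * u = 1" "u * u = w" "w * w = u"
  shows "(a0 + w * a1 + u * a2) * (b0 + u * b1 + w * b2)
       = (a0*b0 + a1*b1 + a2*b2) + w * (a1*b0 + a2*b1 + a0*b2) + u * (a2*b0 + a0*b1 + a1*b2)"
  using assms by algebra

lemma poly_w3:
  fixes w a0 a1 a2 b0 b1 b2 :: complex
  assumes "w ^ 3 = 1"
  shows "(a0 + w * a1 + w^2 * a2) * (b0 + w^2 * b1 + (w^2)^2 * b2)
       = (a0*b0 + a1*b1 + a2*b2) + w * (a1*b0 + a2*b1 + a0*b2) + w^2 * (a2*b0 + a0*b1 + a1*b2)"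
proof -
  have w3: "w * w^2 = 1" using assms by (simp add: eval_nat_numeral)
  have w5: "w^2 * w^2 = w" using w3 by (metis mult.assoc mult.commute mult_1 power2_eq_square)
  have w4: "(w^2)^2 = w" using w5 by (simp add: power2_eq_square)
  have w6: "w * w = w^2" by (simp add: power2_eq_square)
  show ?thesis unfolding w4 by (rule poly_wu[OF w3 w5 w6])
qed

lemma Pexp:
  assumes w: "w ^ 3 = 1"
  shows "exp (complex_of_real x * (w - 1) + complex_of_real y * (w^2 - 1))
       = complex_of_real (gg 0 x y) + w * complex_of_real (gg 1 x y) + w^2 * complex_of_real (gg 2 x y)"
proof -
  have w2: "(w^2)^3 = 1" by (metis power_mult mult.commute w power_one)
  have e1: "exp (w * complex_of_real x) = of_real (Ar 0 x) + w * of_real (Ar 1 x) + w^2 * of_real (Ar 2 x)"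
    unfolding exp_decomp[OF w] sum3 power_0 power_one_right mult_1 ..
  have e2: "exp (w^2 * complex_of_real y) = of_real (Ar 0 y) + w^2 * of_real (Ar 1 y) + (w^2)^2 * of_real (Ar 2 y)"
    unfolding exp_decomp[OF w2] sum3 power_0 power_one_right mult_1 ..
  have "complex_of_real x * (w - 1) + complex_of_real y * (w^2 - 1)
      = complex_of_real (-(x+y)) + (w * complex_of_real x + w^2 * complex_of_real y)"
    by (simp add: algebra_simps)
  then have "exp (complex_of_real x * (w - 1) + complex_of_real y * (w^2 - 1))
      = complex_of_real (exp (-(x+y))) * (exp (w * complex_of_real x) * exp (w^2 * complex_of_real y))"
    by (simp only: exp_add exp_of_real)
  also have "\<dots> = complex_of_real (exp (-(x+y))) *
     ((of_real (Ar 0 x) + w * of_real (Ar 1 x) + w^2 * of_real (Ar 2 x)) * (of_real (Ar 0 y) + w^2 * of_real (Ar 1 y) + (w^2)^2 * of_real (Ar 2 y)))"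
    unfolding e1 e2 ..
  also have "\<dots> = complex_of_real (gg 0 x y) + w * complex_of_real (gg 1 x y) + w^2 * complex_of_real (gg 2 x y)"
    unfolding poly_w3[OF w] gg_def by (simp add: algebra_simps)
  finally show ?thesis .
qed


lemma fprob_gg:
  shows "fprob 1 x y = gg 0 x y" "fprob 2 x y = gg 1 x y" "fprob 3 x y = gg 2 x y"
proof -
  define G0 G1 G2 where "G0 = gg 0 x y" and "G1 = gg 1 x y" and "G2 = gg 2 x y"
  have "exp (complex_of_real x * (1 - 1) + complex_of_real y * (1^2 - 1))
       = complex_of_real G0 + 1 * complex_of_real G1 + 1^2 * complex_of_real G2"
    unfolding G0_def G1_def G2_def by (rule Pexp) simp
  then have "complex_of_real (G0 + G1 + G2) = 1" by simp
  then have sum1: "G0 + G1 + G2 = 1" using of_real_eq_1_iff by blast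
  define z where "z = complex_of_real x * (omega - 1) + complex_of_real y * (omega^2 - 1)"
  have ez: "exp z = complex_of_real G0 + omega * complex_of_real G1 + omega^2 * complex_of_real G2"
    unfolding z_def G0_def G1_def G2_def by (rule Pexp) (rule omega3)
  have Rez: "Re z = -(3/2) * (x + y)" unfolding z_def by (simp add: omega_alt algebra_simps)
  have Imz: "Im z = sqrt 3 / 2 * (x - y)" unfolding z_def by (simp add: omega_alt algebra_simps)
  define E where "E = exp (-(3/2) * (x + y))"
  define c where "c = cos (sqrt 3 / 2 * (x - y))"
  define s where "s = sin (sqrt 3 / 2 * (x - y))"
  have "Re (exp z) = E * c" unfolding Re_exp Rez Imz E_def c_def ..
  moreover have "Re (exp z) = G0 - G1/2 - G2/2" unfolding ez by (simp add: omega_alt)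
  ultimately have hc: "E * c = G0 - G1/2 - G2/2" by simp
  have "Im (exp z) = E * s" unfolding Im_exp Rez Imz E_def s_def ..
  moreover have "Im (exp z) = sqrt 3 / 2 * G1 - sqrt 3 / 2 * G2" unfolding ez by (simp add: omega_alt)
  ultimately have hs: "E * s = sqrt 3 / 2 * G1 - sqrt 3 / 2 * G2" by simp
  have hs3: "sqrt 3 * E * s = 3/2 * G1 - 3/2 * G2"
  proof -
    have "sqrt 3 * E * s = sqrt 3 * (E * s)" by simp
    also have "\<dots> = (sqrt 3 * sqrt 3) / 2 * G1 - (sqrt 3 * sqrt 3) / 2 * G2" unfolding hs by (simp add: algebra_simps)
    also have "\<dots> = 3/2 * G1 - 3/2 * G2" by simp
    finally show ?thesis .
  qed
  have f: "fprob i x y = (if i = 1 then (1 + 2 * (E * c)) / 3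
         else if i = 2 then (1 - E * c + sqrt 3 * E * s) / 3
         else (1 - E * c - sqrt 3 * E * s) / 3)" for i
    unfolding fprob_def Let_def E_def c_def s_def by (simp add: mult.assoc)
  show "fprob 1 x y = gg 0 x y" unfolding f G0_def[symmetric] using sum1 hc by simp
  show "fprob 2 x y = gg 1 x y" unfolding f G1_def[symmetric] using sum1 hc hs3 by simp
  show "fprob 3 x y = gg 2 x y" unfolding f G2_def[symmetric] using sum1 hc hs3 by simp
qed

lemma fprob_nonneg: "0 \<le> x \<Longrightarrow> 0 \<le> y \<Longrightarrow> i \<in> {1,2,3} \<Longrightarrow> 0 \<le> fprob i x y"
  using gg_nonneg fprob_gg by auto

lemma fexp:
  assumes "w ^ 3 = 1"
  shows "complex_of_real (fprob 1 x y) + w * complex_of_real (fprob 2 x y) + w^2 * complex_of_real (fprob 3 x y)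
       = exp (complex_of_real x * (w - 1) + complex_of_real y * (w^2 - 1))"
  unfolding fprob_gg Pexp[OF assms] ..




lemma superop_adj:
  assumes "cmod z = 1" "meq 3 (Weyl a) (\<lambda>i j. z * adj (Weyl b) i j)" "r < 9" "c < 9"
  shows "superop (Weyl a) r c = cnj (superop (Weyl b) c r)"
proof -
  have W: "Weyl a i j = z * cnj (Weyl b j i)" if "i < 3" "j < 3" for i j
    using assms(2) that unfolding meq_def adj_def by auto
  have zz: "z * cnj z = 1" using complex_norm_square[of z] assms(1) by simp
  have "superop (Weyl a) r c = (z * cnj z) * cnj (Weyl b (c div 3) (r div 3) * cnj (Weyl b (c mod 3) (r mod 3)))"
    unfolding superop_def using assms(3,4) by (simp add: W algebra_simps)
  then show ?thesis unfolding zz superop_def by simp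
qed

lemma vv_norm: "\<nu> < 9 \<Longrightarrow> (\<Sum>r<9. cnj (vv \<nu> r) * vv \<nu> r) \<noteq> 0"
proof -
  assume n: "\<nu> < 9"
  have e: "(\<Sum>r<9. cnj (vv \<nu> r) * vv \<nu> r) = complex_of_real (\<Sum>r<9. (cmod (vv \<nu> r))^2)"
    unfolding of_real_sum by (intro sum.cong refl) (metis complex_norm_square mult.commute)
  have "1 \<le> (\<Sum>r<9. (cmod (vv \<nu> r))^2)"
  proof -
    have "(cmod (vv \<nu> (3 * (\<nu> div 3))))^2 \<le> (\<Sum>r<9. (cmod (vv \<nu> r))^2)"
      by (rule member_le_sum[where f="\<lambda>r. (cmod (vv \<nu> r))^2"]) (use n in auto)
    then show ?thesis using vv_base[OF n] by simp
  qed
  then show ?thesis unfolding e by (metis of_real_eq_0_iff not_one_le_zero)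
qed

lemma chi_conj_pair:
  assumes "a < 9" "b < 9" "\<exists>z. cmod z = 1 \<and> meq 3 (Weyl a) (\<lambda>i j. z * adj (Weyl b) i j)" "\<nu> < 9"
  shows "chi b \<nu> = cnj (chi a \<nu>)"
proof -
  obtain z where z: "cmod z = 1" "meq 3 (Weyl a) (\<lambda>i j. z * adj (Weyl b) i j)" using assms(3) by blast
  define v where "v = vv \<nu>"
  define N where "N = (\<Sum>r<9. cnj (v r) * v r)"
  have N0: "N \<noteq> 0" unfolding N_def v_def using vv_norm[OF assms(4)] .
  have "(\<Sum>r<9. cnj (v r) * mv 9 (superop (Weyl a)) v r) = chi a \<nu> * N"
    unfolding N_def v_def sum_distrib_left
    by (intro sum.cong refl) (simp add: mv_superop assms)
  moreover have "(\<Sum>r<9. cnj (v r) * mv 9 (superop (Weyl a)) v r) = cnj (chi b \<nu>) * N"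
  proof -
    have "(\<Sum>r<9. cnj (v r) * mv 9 (superop (Weyl a)) v r) = (\<Sum>r<9. \<Sum>c<9. cnj (v r) * (cnj (superop (Weyl b) c r) * v c))"
      unfolding mv_def sum_distrib_left
      by (intro sum.cong refl) (simp add: superop_adj[OF z] assms)
    also have "\<dots> = (\<Sum>c<9. \<Sum>r<9. cnj (v r) * (cnj (superop (Weyl b) c r) * v c))" by (rule sum.swap)
    also have "\<dots> = (\<Sum>c<9. v c * cnj (mv 9 (superop (Weyl b)) v c))"
      unfolding mv_def by (simp add: sum_distrib_left algebra_simps)
    also have "\<dots> = (\<Sum>c<9. v c * cnj (chi b \<nu> * v c))"
      unfolding v_def by (intro sum.cong refl) (simp add: mv_superop assms)
    also have "\<dots> = cnj (chi b \<nu>) * N" unfolding N_def sum_distrib_left by (intro sum.cong refl) simp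
    finally show ?thesis .
  qed
  ultimately have "chi a \<nu> = cnj (chi b \<nu>)" using N0 by simp
  then show ?thesis by simp
qed


lemma omega_inj3: "x < 3 \<Longrightarrow> y < 3 \<Longrightarrow> omega ^ x = omega ^ y \<Longrightarrow> x = y"
proof -
  assume xy: "x < 3" "y < 3" "omega ^ x = omega ^ y"
  have ne: "omega \<noteq> 1" "omega ^ 2 \<noteq> 1" "omega \<noteq> omega ^ 2"
    using omega_ne1 omega2_ne1 by (auto simp: omega_sq omega_alt complex_eq_iff)
  show "x = y" using lt3_cases[OF xy(1)] lt3_cases[OF xy(2)] xy(3) ne
    by (elim disjE) (simp_all add: eq_commute[of 1])
qed

lemma chi_sep:
  assumes "\<mu> < 9" "\<mu>' < 9" "\<And>\<nu>. \<nu> < 9 \<Longrightarrow> chi \<mu> \<nu> = chi \<mu>' \<nu>"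
  shows "\<mu> = \<mu>'"
proof -
  have "chi \<mu> 3 = chi \<mu>' 3" "chi \<mu> 1 = chi \<mu>' 1" using assms(3) by auto
  then have e: "omega ^ (\<mu> mod 3) = omega ^ (\<mu>' mod 3)"
    "omega ^ ((2 * (\<mu> div 3)) mod 3) = omega ^ ((2 * (\<mu>' div 3)) mod 3)"
    by (simp_all add: chi_def)
  have m: "\<mu> mod 3 = \<mu>' mod 3" by (rule omega_inj3[OF _ _ e(1)]) auto
  have "(2 * (\<mu> div 3)) mod 3 = (2 * (\<mu>' div 3)) mod 3" by (rule omega_inj3[OF _ _ e(2)]) auto
  moreover have "\<mu> div 3 < 3" "\<mu>' div 3 < 3" using assms by auto
  moreover have "\<And>u v. (u::nat) < 3 \<Longrightarrow> v < 3 \<Longrightarrow> (2 * u) mod 3 = (2 * v) mod 3 \<Longrightarrow> u = v"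
  proof -
    fix u v :: nat assume uv: "u < 3" "v < 3" "(2 * u) mod 3 = (2 * v) mod 3"
    show "u = v" using lt3_cases[OF uv(1)] lt3_cases[OF uv(2)] uv(3) by (elim disjE; simp)
  qed
  ultimately have d: "\<mu> div 3 = \<mu>' div 3" by blast
  show ?thesis using m d nat_eq_divmod3 by blast
qed

definition tw :: "nat \<Rightarrow> nat" where
  "tw a = 3 * ((2 * (a div 3)) mod 3) + (2 * (a mod 3)) mod 3"

lemma tw_arith:
  fixes k1 l1 k l :: nat
  assumes "k1 < 3" "l1 < 3" "k < 3" "l < 3"
  shows "(((2 * l1) mod 3) * k + 2 * ((2 * k1) mod 3) * l) mod 3 = (2 * ((l1 * k + 2 * k1 * l) mod 3)) mod 3"
  using lt3_cases[OF assms(1)] lt3_cases[OF assms(2)] lt3_cases[OF assms(3)] lt3_cases[OF assms(4)]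
  by (elim disjE; simp)

lemma chi_tw: "a < 9 \<Longrightarrow> \<nu> < 9 \<Longrightarrow> chi (tw a) \<nu> = cnj (chi a \<nu>)"
  unfolding chi_def cnj_omega_pow
  apply (rule omega_pow_cong)
  using tw_arith[of "a div 3" "a mod 3" "\<nu> div 3" "\<nu> mod 3"]
  by (simp add: tw_def)

lemma tw_lt: "tw a < 9" unfolding tw_def by simp

lemma indep_arith:
  fixes k1 l1 k2 l2 :: nat
  assumes "k1 < 3" "l1 < 3" "k2 < 3" "l2 < 3" "\<not> (k1 = 0 \<and> l1 = 0)" "(k1*l2 + 2*k2*l1) mod 3 = 0"
  shows "(k2 = 0 \<and> l2 = 0) \<or> (k2 = k1 \<and> l2 = l1) \<or> (k2 = (2*k1) mod 3 \<and> l2 = (2*l1) mod 3)"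
  using lt3_cases[OF assms(1)] lt3_cases[OF assms(2)] lt3_cases[OF assms(3)] lt3_cases[OF assms(4)] assms(5,6)
  by (elim disjE; simp)

lemma decomp_arith:
  fixes k l k1 l1 k2 l2 :: nat
  assumes "k < 3" "l < 3" "k1 < 3" "l1 < 3" "k2 < 3" "l2 < 3" "(k1*l2 + 2*k2*l1) mod 3 \<noteq> 0"
  shows "k = (((((k1*l2 + 2*k2*l1) mod 3) * (k*l2 + 2*k2*l)) mod 3) * k1 + ((((k1*l2 + 2*k2*l1) mod 3) * (k1*l + 2*k*l1)) mod 3) * k2) mod 3
       \<and> l = (((((k1*l2 + 2*k2*l1) mod 3) * (k*l2 + 2*k2*l)) mod 3) * l1 + ((((k1*l2 + 2*k2*l1) mod 3) * (k1*l + 2*k*l1)) mod 3) * l2) mod 3"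
  using lt3_cases[OF assms(1)] lt3_cases[OF assms(2)] lt3_cases[OF assms(3)] lt3_cases[OF assms(4)]
    lt3_cases[OF assms(5)] lt3_cases[OF assms(6)] assms(7)
  by (elim disjE; simp)

lemma nustar_arith:
  fixes k1 l1 k2 l2 :: nat
  assumes "k1 < 3" "l1 < 3" "k2 < 3" "l2 < 3" "(k1*l2 + 2*k2*l1) mod 3 \<noteq> 0"
  shows "(l1 * ((((k1*l2 + 2*k2*l1) mod 3) * (k1 + 2*k2)) mod 3) + 2 * k1 * ((((k1*l2 + 2*k2*l1) mod 3) * (l1 + 2*l2)) mod 3)) mod 3 \<noteq> 0
       \<and> (l2 * ((((k1*l2 + 2*k2*l1) mod 3) * (k1 + 2*k2)) mod 3) + 2 * k2 * ((((k1*l2 + 2*k2*l1) mod 3) * (l1 + 2*l2)) mod 3)) mod 3 \<noteq> 0"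
  using lt3_cases[OF assms(1)] lt3_cases[OF assms(2)] lt3_cases[OF assms(3)] lt3_cases[OF assms(4)] assms(5)
  by (elim disjE; simp)

lemma mod_cong2: "((x::nat) mod 3 * A + 2 * (y mod 3) * B) mod 3 = (x * A + 2 * y * B) mod 3"
  by (intro mod_add_cong mod_mult_cong) simp_all




definition dd :: "nat \<Rightarrow> nat \<Rightarrow> nat" where
  "dd a \<alpha> = ((a div 3)*(\<alpha> mod 3) + 2*(\<alpha> div 3)*(a mod 3)) mod 3"
definition ci :: "nat \<Rightarrow> nat \<Rightarrow> nat \<Rightarrow> nat" where
  "ci a \<alpha> \<mu> = (dd a \<alpha> * ((\<mu> div 3)*(\<alpha> mod 3) + 2*(\<alpha> div 3)*(\<mu> mod 3))) mod 3"
definition cj :: "nat \<Rightarrow> nat \<Rightarrow> nat \<Rightarrow> nat" where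
  "cj a \<alpha> \<mu> = (dd a \<alpha> * ((a div 3)*(\<mu> mod 3) + 2*(\<mu> div 3)*(a mod 3))) mod 3"

lemma decomp:
  assumes "a < 9" "\<alpha> < 9" "\<mu> < 9" "dd a \<alpha> \<noteq> 0"
  shows "\<mu> div 3 = (ci a \<alpha> \<mu> * (a div 3) + cj a \<alpha> \<mu> * (\<alpha> div 3)) mod 3"
        "\<mu> mod 3 = (ci a \<alpha> \<mu> * (a mod 3) + cj a \<alpha> \<mu> * (\<alpha> mod 3)) mod 3"
proof -
  have lt: "\<mu> div 3 < 3" "\<mu> mod 3 < 3" "a div 3 < 3" "a mod 3 < 3" "\<alpha> div 3 < 3" "\<alpha> mod 3 < 3"
    using assms by auto
  have d: "((a div 3)*(\<alpha> mod 3) + 2*(\<alpha> div 3)*(a mod 3)) mod 3 \<noteq> 0" using assms(4) unfolding dd_def .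
  note D = decomp_arith[OF lt d]
  show "\<mu> div 3 = (ci a \<alpha> \<mu> * (a div 3) + cj a \<alpha> \<mu> * (\<alpha> div 3)) mod 3"
    unfolding ci_def cj_def dd_def by (rule conjunct1[OF D])
  show "\<mu> mod 3 = (ci a \<alpha> \<mu> * (a mod 3) + cj a \<alpha> \<mu> * (\<alpha> mod 3)) mod 3"
    unfolding ci_def cj_def dd_def by (rule conjunct2[OF D])
qed

lemma chi_pow3: "chi \<mu> \<nu> ^ 3 = 1"
  unfolding chi_def by (metis omega3 power_mult mult.commute power_one)

lemma chi_decomp:
  assumes "a < 9" "\<alpha> < 9" "\<mu> < 9" "dd a \<alpha> \<noteq> 0"
  shows "chi \<mu> \<nu> = chi a \<nu> ^ ci a \<alpha> \<mu> * chi \<alpha> \<nu> ^ cj a \<alpha> \<mu>"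
proof -
  define i where "i = ci a \<alpha> \<mu>"
  define j where "j = cj a \<alpha> \<mu>"
  note dec = decomp[OF assms, folded i_def j_def]
  have "chi \<mu> \<nu> = omega ^ ((((i * (a mod 3) + j * (\<alpha> mod 3)) mod 3) * (\<nu> div 3) + 2 * ((i * (a div 3) + j * (\<alpha> div 3)) mod 3) * (\<nu> mod 3)) mod 3)"
    unfolding chi_def by (subst dec(1), subst dec(2), rule refl)
  also have "\<dots> = omega ^ (((i * (a mod 3) + j * (\<alpha> mod 3)) * (\<nu> div 3) + 2 * (i * (a div 3) + j * (\<alpha> div 3)) * (\<nu> mod 3)) mod 3)"
    unfolding mod_cong2 ..
  also have "\<dots> = omega ^ ((a mod 3 * (\<nu> div 3) + 2 * (a div 3) * (\<nu> mod 3)) * i + (\<alpha> mod 3 * (\<nu> div 3) + 2 * (\<alpha> div 3) * (\<nu> mod 3)) * j)"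
    by (subst omega_pow_mod[symmetric], rule arg_cong[where f="\<lambda>n. omega ^ n"]) (simp add: algebra_simps)
  also have "\<dots> = chi a \<nu> ^ i * chi \<alpha> \<nu> ^ j"
    unfolding chi_alt power_add power_mult ..
  finally show ?thesis unfolding i_def j_def .
qed

definition sgm :: "nat \<Rightarrow> nat \<Rightarrow> nat \<Rightarrow> nat \<times> nat" where
  "sgm a \<alpha> \<mu> = (ci a \<alpha> \<mu> + 1, cj a \<alpha> \<mu> + 1)"

lemma ci_lt: "ci a \<alpha> \<mu> < 3" unfolding ci_def by simp
lemma cj_lt: "cj a \<alpha> \<mu> < 3" unfolding cj_def by simp

lemma sgm_bij:
  assumes "a < 9" "\<alpha> < 9" "dd a \<alpha> \<noteq> 0"
  shows "bij_betw (sgm a \<alpha>) {0..<9} ({1,2,3} \<times> {1,2,3})"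
proof -
  have inj: "inj_on (sgm a \<alpha>) {0..<9}"
  proof (rule inj_onI)
    fix x y assume xy: "x \<in> {0..<9::nat}" "y \<in> {0..<9::nat}" "sgm a \<alpha> x = sgm a \<alpha> y"
    then have e: "ci a \<alpha> x = ci a \<alpha> y" "cj a \<alpha> x = cj a \<alpha> y" unfolding sgm_def by auto
    have "x div 3 = y div 3" "x mod 3 = y mod 3"
      using decomp[OF assms(1,2) _ assms(3), of x] decomp[OF assms(1,2) _ assms(3), of y] xy e by auto
    then show "x = y" using nat_eq_divmod3 by blast
  qed
  have sub: "sgm a \<alpha> ` {0..<9} \<subseteq> {1,2,3} \<times> {1,2,3}"
  proof
    fix z assume "z \<in> sgm a \<alpha> ` {0..<9}"
    then obtain \<mu> where z: "z = sgm a \<alpha> \<mu>" by auto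
    have "ci a \<alpha> \<mu> + 1 \<in> {1,2,3}" "cj a \<alpha> \<mu> + 1 \<in> {1,2,3::nat}"
      using lt3_cases[OF ci_lt[of a \<alpha> \<mu>]] lt3_cases[OF cj_lt[of a \<alpha> \<mu>]] by auto
    then show "z \<in> {1,2,3} \<times> {1,2,3}" unfolding z sgm_def by auto
  qed
  have "card (sgm a \<alpha> ` {0..<9}) = card ({1,2,3::nat} \<times> {1,2,3::nat})"
    using card_image[OF inj] by simp
  then have "sgm a \<alpha> ` {0..<9} = {1,2,3} \<times> {1,2,3}"
    by (intro card_subset_eq sub) auto
  then show ?thesis using inj unfolding bij_betw_def by simp
qed

lemma indep:
  assumes "a \<in> {1..8}" "b \<in> {1..8}" "\<alpha> \<in> {1..8}" "\<alpha> \<noteq> a" "\<alpha> \<noteq> b"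
    "\<And>\<nu>. \<nu> < 9 \<Longrightarrow> chi b \<nu> = cnj (chi a \<nu>)"
  shows "dd a \<alpha> \<noteq> 0"
proof
  assume d: "dd a \<alpha> = 0"
  have nz: "\<not> (a div 3 = 0 \<and> a mod 3 = 0)" using assms(1) nat_eq_divmod3[of a 0] by auto
  have "(\<alpha> div 3 = 0 \<and> \<alpha> mod 3 = 0) \<or> (\<alpha> div 3 = a div 3 \<and> \<alpha> mod 3 = a mod 3)
      \<or> (\<alpha> div 3 = (2 * (a div 3)) mod 3 \<and> \<alpha> mod 3 = (2 * (a mod 3)) mod 3)"
    using indep_arith[of "a div 3" "a mod 3" "\<alpha> div 3" "\<alpha> mod 3"] assms(1,3) nz d
    unfolding dd_def by auto
  moreover have "\<not> (\<alpha> div 3 = 0 \<and> \<alpha> mod 3 = 0)" using assms(3) nat_eq_divmod3[of \<alpha> 0] by auto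
  moreover have "\<not> (\<alpha> div 3 = a div 3 \<and> \<alpha> mod 3 = a mod 3)" using assms(4) nat_eq_divmod3[of \<alpha> a] by auto
  ultimately have "\<alpha> div 3 = tw a div 3 \<and> \<alpha> mod 3 = tw a mod 3" unfolding tw_def by auto
  then have "\<alpha> = tw a" using nat_eq_divmod3 by blast
  then have "\<And>\<nu>. \<nu> < 9 \<Longrightarrow> chi \<alpha> \<nu> = chi b \<nu>" using chi_tw assms(1,6) by auto
  then have "\<alpha> = b" using chi_sep assms(2,3) by auto
  then show False using assms(5) by simp
qed


definition pp :: "nat \<Rightarrow> nat \<Rightarrow> real \<Rightarrow> real \<Rightarrow> real \<Rightarrow> real \<Rightarrow> nat \<Rightarrow> real" where
  "pp a \<alpha> x1 y1 x2 y2 \<mu> = (if \<mu> < 9 then fprob (ci a \<alpha> \<mu> + 1) x1 y1 * fprob (cj a \<alpha> \<mu> + 1) x2 y2 else 0)"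

lemma sum123: "(\<Sum>i\<in>{1,2,3::nat}. f i) = f 1 + f 2 + f 3" by (simp add: add.assoc)

lemma lam_pp:
  assumes "a < 9" "\<alpha> < 9" "dd a \<alpha> \<noteq> 0"
  shows "lam (pp a \<alpha> x1 y1 x2 y2) \<nu> =
    exp (complex_of_real x1 * (chi a \<nu> - 1) + complex_of_real y1 * ((chi a \<nu>)^2 - 1)) *
    exp (complex_of_real x2 * (chi \<alpha> \<nu> - 1) + complex_of_real y2 * ((chi \<alpha> \<nu>)^2 - 1))"
proof -
  define X where "X = chi a \<nu>"
  define Y where "Y = chi \<alpha> \<nu>"
  define H where "H = (\<lambda>(i::nat, j::nat). complex_of_real (fprob i x1 y1) * X ^ (i - 1) * (complex_of_real (fprob j x2 y2) * Y ^ (j - 1)))"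
  have "lam (pp a \<alpha> x1 y1 x2 y2) \<nu> = (\<Sum>\<mu>\<in>{0..<9}. H (sgm a \<alpha> \<mu>))"
    unfolding lam_def lessThan_atLeast0
  proof (intro sum.cong refl)
    fix \<mu> assume "\<mu> \<in> {0..<9::nat}"
    then have m: "\<mu> < 9" by simp
    show "complex_of_real (pp a \<alpha> x1 y1 x2 y2 \<mu>) * chi \<mu> \<nu> = H (sgm a \<alpha> \<mu>)"
      unfolding pp_def H_def sgm_def chi_decomp[OF assms(1,2) m assms(3)] X_def Y_def using m by simp
  qed
  also have "\<dots> = (\<Sum>z\<in>{1,2,3} \<times> {1,2,3}. H z)"
    by (rule sum.reindex_bij_betw[OF sgm_bij[OF assms]])
  also have "\<dots> = (\<Sum>i\<in>{1,2,3::nat}. complex_of_real (fprob i x1 y1) * X ^ (i - 1)) *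
                  (\<Sum>j\<in>{1,2,3::nat}. complex_of_real (fprob j x2 y2) * Y ^ (j - 1))"
    unfolding sum_product sum.cartesian_product H_def ..
  also have "\<dots> = (complex_of_real (fprob 1 x1 y1) + X * complex_of_real (fprob 2 x1 y1) + X^2 * complex_of_real (fprob 3 x1 y1)) *
                  (complex_of_real (fprob 1 x2 y2) + Y * complex_of_real (fprob 2 x2 y2) + Y^2 * complex_of_real (fprob 3 x2 y2))"
    unfolding sum123 by (simp add: mult.commute)
  also have "\<dots> = exp (complex_of_real x1 * (X - 1) + complex_of_real y1 * (X^2 - 1)) *
    exp (complex_of_real x2 * (Y - 1) + complex_of_real y2 * (Y^2 - 1))"
    unfolding fexp[OF chi_pow3[of a \<nu>, folded X_def]] fexp[OF chi_pow3[of \<alpha> \<nu>, folded Y_def]] ..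
  finally show ?thesis unfolding X_def Y_def .
qed

lemma cnj_chi_sq: "cnj (chi \<mu> \<nu>) = (chi \<mu> \<nu>)^2"
  unfolding chi_def cnj_omega_pow by (metis power_mult mult.commute)


lemma part1:
  assumes "a < 9" "b < 9" "\<alpha> < 9" "\<beta> < 9" "dd a \<alpha> \<noteq> 0"
    and cb: "\<And>\<nu>. \<nu> < 9 \<Longrightarrow> chi b \<nu> = cnj (chi a \<nu>)"
    and c\<beta>: "\<And>\<nu>. \<nu> < 9 \<Longrightarrow> chi \<beta> \<nu> = cnj (chi \<alpha> \<nu>)"
  shows "meq 9 (weyl_channel (pp a \<alpha> ta tb t\<alpha> t\<beta>))
               (mexp 9 (\<lambda>r c. complex_of_real ta * Lgen a r c + complex_of_real tb * Lgen b r c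
                             + complex_of_real t\<alpha> * Lgen \<alpha> r c + complex_of_real t\<beta> * Lgen \<beta> r c))"
proof (rule DET)
  fix \<nu> i :: nat assume ni: "\<nu> < 9" "i < 9"
  define X where "X = chi a \<nu>"
  define Y where "Y = chi \<alpha> \<nu>"
  define l where "l = complex_of_real ta * (X - 1) + complex_of_real tb * (X^2 - 1)
                   + complex_of_real t\<alpha> * (Y - 1) + complex_of_real t\<beta> * (Y^2 - 1)"
  have Mv: "mv 9 (\<lambda>r c. complex_of_real ta * Lgen a r c + complex_of_real tb * Lgen b r c
                             + complex_of_real t\<alpha> * Lgen \<alpha> r c + complex_of_real t\<beta> * Lgen \<beta> r c) (vv \<nu>) k = l * vv \<nu> k"
    if "k < 9" for k
  proof -
    have "chi b \<nu> = X^2" "chi \<beta> \<nu> = Y^2" unfolding X_def Y_def using cb c\<beta> ni cnj_chi_sq by auto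
    then show ?thesis unfolding mv_add mv_scale l_def X_def Y_def
      using that ni assms(1-4) by (simp add: mv_Lgen algebra_simps)
  qed
  have "mv 9 (weyl_channel (pp a \<alpha> ta tb t\<alpha> t\<beta>)) (vv \<nu>) i = lam (pp a \<alpha> ta tb t\<alpha> t\<beta>) \<nu> * vv \<nu> i"
    by (rule mv_weyl_channel[OF ni])
  also have "lam (pp a \<alpha> ta tb t\<alpha> t\<beta>) \<nu> = exp l"
    unfolding lam_pp[OF assms(1,3,5)] l_def X_def Y_def exp_add[symmetric] by (simp add: algebra_simps)
  also have "exp l * vv \<nu> i = mv 9 (mexp 9 (\<lambda>r c. complex_of_real ta * Lgen a r c + complex_of_real tb * Lgen b r c
                             + complex_of_real t\<alpha> * Lgen \<alpha> r c + complex_of_real t\<beta> * Lgen \<beta> r c)) (vv \<nu>) i"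
    by (rule mexp_eigen[OF Mv ni(2), symmetric])
  finally show "mv 9 (weyl_channel (pp a \<alpha> ta tb t\<alpha> t\<beta>)) (vv \<nu>) i = \<dots>" .
qed

lemma lam_zero: "lam p 0 = complex_of_real (\<Sum>\<mu><9. p \<mu>)"
  unfolding lam_def by simp

lemma pp_simplex:
  assumes "a < 9" "\<alpha> < 9" "dd a \<alpha> \<noteq> 0" "0 \<le> x1" "0 \<le> y1" "0 \<le> x2" "0 \<le> y2"
  shows "pp a \<alpha> x1 y1 x2 y2 \<in> weyl_simplex"
proof -
  have nn: "0 \<le> pp a \<alpha> x1 y1 x2 y2 \<mu>" for \<mu>
  proof -
    have "ci a \<alpha> \<mu> + 1 \<in> {1,2,3}" "cj a \<alpha> \<mu> + 1 \<in> {1,2,3::nat}"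
      using lt3_cases[OF ci_lt[of a \<alpha> \<mu>]] lt3_cases[OF cj_lt[of a \<alpha> \<mu>]] by auto
    then show ?thesis unfolding pp_def using fprob_nonneg assms(4-7) by (auto intro!: mult_nonneg_nonneg)
  qed
  have "lam (pp a \<alpha> x1 y1 x2 y2) 0 = 1" unfolding lam_pp[OF assms(1-3)] by simp
  then have "(\<Sum>\<mu><9. pp a \<alpha> x1 y1 x2 y2 \<mu>) = 1" unfolding lam_zero using of_real_eq_1_iff by blast
  then show ?thesis unfolding weyl_simplex_def using nn by (auto simp: pp_def)
qed




lemma Re_ell: "Re (ell t \<nu>) = (\<Sum>\<mu>\<in>{1..8}. t \<mu> * (Re (chi \<mu> \<nu>) - 1))"
  unfolding ell_def by (simp add: Re_sum)

lemma chi_omega: "chi \<mu> \<nu> = omega ^ ((\<mu> mod 3 * (\<nu> div 3) + 2 * (\<mu> div 3) * (\<nu> mod 3)) mod 3)"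
  by (rule chi_def)

lemma Re_chi_ge: "Re (chi \<mu> \<nu>) \<ge> -1/2"
  unfolding chi_def by (rule Re_omega_pow)

lemma cmod_chi: "cmod (chi \<mu> \<nu>) = 1"
  unfolding chi_def by (rule norm_omega_pow)

lemma Re_chi_le: "Re (chi \<mu> \<nu>) \<le> 1"
  using abs_Re_le_cmod[of "chi \<mu> \<nu>"] cmod_chi[of \<mu> \<nu>] by simp

lemma Re_chi_ne1: "chi \<mu> \<nu> \<noteq> 1 \<Longrightarrow> Re (chi \<mu> \<nu>) = -1/2"
  unfolding chi_def by (rule Re_omega_pow_ne1) (simp add: omega_pow_eq1_iff)

lemma sum_Re_ell: "(\<Sum>\<nu><9. Re (ell t \<nu>)) = -9 * (\<Sum>\<mu>\<in>{1..8}. t \<mu>)"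
proof -
  have "(\<Sum>\<nu><9. Re (ell t \<nu>)) = (\<Sum>\<mu>\<in>{1..8}. \<Sum>\<nu><9. t \<mu> * (Re (chi \<mu> \<nu>) - 1))"
    unfolding Re_ell by (rule sum.swap)
  also have "\<dots> = (\<Sum>\<mu>\<in>{1..8}. t \<mu> * (Re (\<Sum>\<nu><9. chi \<mu> \<nu>) - 9))"
    by (intro sum.cong refl) (simp add: sum_distrib_left[symmetric] sum_subtractf Re_sum)
  also have "\<dots> = (\<Sum>\<mu>\<in>{1..8}. t \<mu> * (-9))"
    by (intro sum.cong refl) (auto simp: chi_sum2)
  finally show ?thesis by (simp add: sum_negf sum_distrib_right[symmetric] mult.commute)
qed

lemma six_Re_ell_ge: "(\<And>\<mu>. \<mu> \<in> {1..8} \<Longrightarrow> 0 \<le> t \<mu>) \<Longrightarrow> 6 * Re (ell t \<nu>) \<ge> -9 * (\<Sum>\<mu>\<in>{1..8}. t \<mu>)"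
proof -
  assume t: "\<And>\<mu>. \<mu> \<in> {1..8} \<Longrightarrow> 0 \<le> t \<mu>"
  have "-9 * (\<Sum>\<mu>\<in>{1..8}. t \<mu>) = (\<Sum>\<mu>\<in>{1..8}. 6 * (t \<mu> * (-1/2 - 1)))"
    by (simp add: sum_distrib_left)
  also have "\<dots> \<le> (\<Sum>\<mu>\<in>{1..8}. 6 * (t \<mu> * (Re (chi \<mu> \<nu>) - 1)))"
  proof (intro sum_mono)
    fix \<mu> assume m: "\<mu> \<in> {1..8::nat}"
    have "t \<mu> * (-1/2 - 1) \<le> t \<mu> * (Re (chi \<mu> \<nu>) - 1)"
      using t[OF m] Re_chi_ge[of \<mu> \<nu>] by (intro mult_left_mono) auto
    then show "6 * (t \<mu> * (-1/2 - 1)) \<le> 6 * (t \<mu> * (Re (chi \<mu> \<nu>) - 1))" by simp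
  qed
  also have "\<dots> = 6 * Re (ell t \<nu>)" unfolding Re_ell by (simp add: sum_distrib_left)
  finally show ?thesis .
qed

lemma six_Re_ell_eq: "(\<And>\<mu>. \<mu> \<in> {1..8} \<Longrightarrow> t \<mu> = 0 \<or> chi \<mu> \<nu> \<noteq> 1) \<Longrightarrow> 6 * Re (ell t \<nu>) = -9 * (\<Sum>\<mu>\<in>{1..8}. t \<mu>)"
proof -
  assume t: "\<And>\<mu>. \<mu> \<in> {1..8} \<Longrightarrow> t \<mu> = 0 \<or> chi \<mu> \<nu> \<noteq> 1"
  have "6 * Re (ell t \<nu>) = (\<Sum>\<mu>\<in>{1..8}. 6 * (t \<mu> * (Re (chi \<mu> \<nu>) - 1)))"
    unfolding Re_ell by (simp add: sum_distrib_left)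
  also have "\<dots> = (\<Sum>\<mu>\<in>{1..8}. 6 * (t \<mu> * (-1/2 - 1)))"
  proof (intro sum.cong refl)
    fix \<mu> assume "\<mu> \<in> {1..8::nat}"
    then show "6 * (t \<mu> * (Re (chi \<mu> \<nu>) - 1)) = 6 * (t \<mu> * (-1/2 - 1))"
      using t[of \<mu>] Re_chi_ne1[of \<mu> \<nu>] by auto
  qed
  also have "\<dots> = -9 * (\<Sum>\<mu>\<in>{1..8}. t \<mu>)" by (simp add: sum_distrib_left)
  finally show ?thesis .
qed

lemma prod_lam_exp:
  assumes "meq 9 (weyl_channel q) (mexp 9 (gen_comb t))"
  shows "(\<Prod>\<nu><9. cmod (lam q \<nu>)) = exp (-9 * (\<Sum>\<mu>\<in>{1..8}. t \<mu>))"
    "\<nu>' < 9 \<Longrightarrow> cmod (lam q \<nu>') ^ 6 = exp (6 * Re (ell t \<nu>'))"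
proof -
  have "(\<Prod>\<nu><9. cmod (lam q \<nu>)) = (\<Prod>\<nu><9. exp (Re (ell t \<nu>)))"
    by (intro prod.cong refl) (simp add: EIG[OF assms])
  also have "\<dots> = exp (\<Sum>\<nu><9. Re (ell t \<nu>))" by (simp add: exp_sum)
  finally show "(\<Prod>\<nu><9. cmod (lam q \<nu>)) = exp (-9 * (\<Sum>\<mu>\<in>{1..8}. t \<mu>))" unfolding sum_Re_ell .
  assume "\<nu>' < 9"
  then have "cmod (lam q \<nu>') = exp (Re (ell t \<nu>'))" by (simp add: EIG[OF assms])
  then show "cmod (lam q \<nu>') ^ 6 = exp (6 * Re (ell t \<nu>'))"
    using exp_of_nat_mult[of 6 "Re (ell t \<nu>')"] by simp
qed

lemma NEC:
  assumes "q \<in> AQ3" "\<nu>' < 9"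
  shows "(\<Prod>\<nu><9. cmod (lam q \<nu>)) \<le> cmod (lam q \<nu>') ^ 6"
proof -
  obtain t where t0: "\<forall>\<mu>\<in>{1..8}. 0 \<le> t \<mu>" and t2: "meq 9 (weyl_channel q) (mexp 9 (gen_comb t))"
    using assms(1) unfolding AQ3_def by blast
  have t: "\<And>\<mu>. \<mu> \<in> {1..8} \<Longrightarrow> 0 \<le> t \<mu>" "meq 9 (weyl_channel q) (mexp 9 (gen_comb t))"
    using t0 t2 by auto
  show ?thesis unfolding prod_lam_exp[OF t(2)] prod_lam_exp(2)[OF t(2) assms(2)]
    using six_Re_ell_ge[where \<nu>=\<nu>' and t=t, OF t(1)] by simp
qed


lemma lam_lin: "lam (\<lambda>\<mu>. (1 - e) * p \<mu> + e * r \<mu>) \<nu> = complex_of_real (1 - e) * lam p \<nu> + complex_of_real e * lam r \<nu>"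
  unfolding lam_def sum_distrib_left sum.distrib[symmetric] by (intro sum.cong refl) (simp add: algebra_simps)

lemma lam_gneg: "\<nu> < 9 \<Longrightarrow> lam q (gneg \<nu>) = cnj (lam q \<nu>)"
  unfolding lam_def by (simp add: chi_gneg)

definition rr :: "complex \<Rightarrow> nat \<Rightarrow> nat \<Rightarrow> real" where
  "rr g \<nu>0 \<mu> = (if \<mu> < 9 then (1 + 2 * Re (g * cnj (chi \<mu> \<nu>0))) / 9 else 0)"

lemma lam_rr:
  assumes "\<nu>0 < 9" "\<nu> < 9"
  shows "lam (rr g \<nu>0) \<nu> = (if \<nu> = 0 then 1 else 0) + (if \<nu> = \<nu>0 then g else 0) + (if \<nu> = gneg \<nu>0 then cnj g else 0)"
proof -
  have "lam (rr g \<nu>0) \<nu> = (\<Sum>\<mu><9. (chi \<mu> \<nu> + g * (cnj (chi \<mu> \<nu>0) * chi \<mu> \<nu>) + cnj g * (chi \<mu> \<nu>0 * chi \<mu> \<nu>)) / 9)"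
    unfolding lam_def
  proof (intro sum.cong refl)
    fix \<mu> assume "\<mu> \<in> {..<9::nat}"
    then have m: "\<mu> < 9" by simp
    have "complex_of_real (2 * Re (g * cnj (chi \<mu> \<nu>0))) = g * cnj (chi \<mu> \<nu>0) + cnj g * chi \<mu> \<nu>0"
      unfolding complex_add_cnj[symmetric] by simp
    then show "complex_of_real (rr g \<nu>0 \<mu>) * chi \<mu> \<nu> = (chi \<mu> \<nu> + g * (cnj (chi \<mu> \<nu>0) * chi \<mu> \<nu>) + cnj g * (chi \<mu> \<nu>0 * chi \<mu> \<nu>)) / 9"
      unfolding rr_def using m by (simp add: algebra_simps)
  qed
  also have "\<dots> = ((\<Sum>\<mu><9. chi \<mu> \<nu>) + g * (\<Sum>\<mu><9. cnj (chi \<mu> \<nu>0) * chi \<mu> \<nu>) + cnj g * (\<Sum>\<mu><9. chi \<mu> \<nu>0 * chi \<mu> \<nu>)) / 9"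
    by (simp add: sum_divide_distrib[symmetric] sum.distrib sum_distrib_left)
  also have "\<dots> = (if \<nu> = 0 then 1 else 0) + (if \<nu> = \<nu>0 then g else 0) + (if \<nu> = gneg \<nu>0 then cnj g else 0)"
    unfolding chi_sum1[OF assms(2)] orth1[OF assms] orth2[OF assms] by simp
  finally show ?thesis .
qed

lemma rr_nonneg:
  assumes "cmod g = 1/2" shows "0 \<le> rr g \<nu>0 \<mu>"
proof -
  have "- cmod (g * cnj (chi \<mu> \<nu>0)) \<le> Re (g * cnj (chi \<mu> \<nu>0))"
    using abs_Re_le_cmod[of "g * cnj (chi \<mu> \<nu>0)"] by linarith
  moreover have "cmod (g * cnj (chi \<mu> \<nu>0)) = 1/2" using assms by (simp add: norm_mult cmod_chi)
  ultimately show ?thesis unfolding rr_def by auto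
qed

lemma rr_sum:
  assumes "\<nu>0 < 9" "\<nu>0 \<noteq> 0" shows "(\<Sum>\<mu><9. rr g \<nu>0 \<mu>) = 1"
proof -
  have "lam (rr g \<nu>0) 0 = 1" using lam_rr[OF assms(1), of 0] gneg_facts[OF assms] assms(2) by simp
  then show ?thesis unfolding lam_zero using of_real_eq_1_iff by blast
qed

lemma prod9_split:
  fixes f :: "nat \<Rightarrow> real"
  assumes "x < 9" "y < 9" "z < 9" "x \<noteq> y" "x \<noteq> z" "y \<noteq> z"
  shows "prod f {..<9} = f x * f y * f z * prod f ({..<9} - {x,y,z})"
proof -
  have "prod f {..<9} = f x * prod f ({..<9} - {x})" using assms by (intro prod.remove) auto
  also have "prod f ({..<9} - {x}) = f y * prod f ({..<9} - {x} - {y})" using assms by (intro prod.remove) auto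
  also have "prod f ({..<9} - {x} - {y}) = f z * prod f ({..<9} - {x} - {y} - {z})" using assms by (intro prod.remove) auto
  also have "{..<9} - {x} - {y} - {z} = {..<9} - {x,y,z}" by auto
  finally show ?thesis by (simp add: mult.assoc)
qed

lemma card_R: "x < 9 \<Longrightarrow> y < 9 \<Longrightarrow> z < 9 \<Longrightarrow> x \<noteq> y \<Longrightarrow> x \<noteq> z \<Longrightarrow> y \<noteq> z \<Longrightarrow> card ({..<9::nat} - {x,y,z}) = 6"
  by (subst card_Diff_subset) auto

lemma kappa_ineq:
  fixes e k :: real
  assumes "0 < e" "e \<le> 1/2" "0 < k" "k \<le> 1 - 3/2 * e"
  shows "k ^ 4 < (1 - e) ^ 6"
proof -
  have "k^2 \<le> (1 - 3/2 * e)^2" using assms by (intro power_mono) auto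
  also have "\<dots> < (1 - e)^3"
  proof -
    have "(1 - e)^3 - (1 - 3/2 * e)^2 = e^2 * (3/4 - e)"
      by (simp add: algebra_simps power2_eq_square power3_eq_cube)
    moreover have "0 < e^2 * (3/4 - e)" using assms by (intro mult_pos_pos) auto
    ultimately show ?thesis by linarith
  qed
  finally have "k^2 < (1 - e)^3" .
  then have "(k^2)^2 < ((1 - e)^3)^2" by (intro power_strict_mono) auto
  then show ?thesis by (simp add: power_mult[symmetric])
qed


lemma perturb_not_AQ3:
  assumes p: "p \<in> weyl_simplex" and n0: "\<nu>0 < 9" "\<nu>0 \<noteq> 0"
    and eqp: "(\<Prod>\<nu><9. cmod (lam p \<nu>)) = cmod (lam p \<nu>0) ^ 6"
    and rho: "0 < cmod (lam p \<nu>0)" "cmod (lam p \<nu>0) \<le> 1"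
    and e: "0 < e" "e \<le> cmod (lam p \<nu>0) / (2 * cmod (lam p \<nu>0) + 1)"
  defines "g \<equiv> - lam p \<nu>0 / complex_of_real (2 * cmod (lam p \<nu>0))"
  shows "(\<lambda>\<mu>. (1 - e) * p \<mu> + e * rr g \<nu>0 \<mu>) \<in> weyl_simplex"
    "(\<lambda>\<mu>. (1 - e) * p \<mu> + e * rr g \<nu>0 \<mu>) \<notin> AQ3"
proof -
  define \<rho> where "\<rho> = cmod (lam p \<nu>0)"
  define q where "q = (\<lambda>\<mu>. (1 - e) * p \<mu> + e * rr g \<nu>0 \<mu>)"
  have \<rho>0: "0 < \<rho>" "\<rho> \<le> 1" using rho unfolding \<rho>_def by auto
  have eb: "e * (2 * \<rho> + 1) \<le> \<rho>" using e \<rho>0 unfolding \<rho>_def[symmetric] by (simp add: pos_le_divide_eq)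
  have "\<rho> / (2 * \<rho> + 1) \<le> 1/2" using \<rho>0 by (simp add: divide_simps)
  then have ehalf: "e \<le> 1/2" using e(2) unfolding \<rho>_def by linarith
  have gn: "cmod g = 1/2" unfolding g_def \<rho>_def[symmetric] using \<rho>0 by (simp add: norm_divide \<rho>_def)
  have pn: "\<And>\<mu>. 0 \<le> p \<mu>" "\<And>\<mu>. \<mu> \<ge> 9 \<Longrightarrow> p \<mu> = 0" "(\<Sum>\<mu><9. p \<mu>) = 1"
    using p unfolding weyl_simplex_def by auto
  have lp0: "lam p 0 = 1" unfolding lam_zero pn(3) by simp
  have gf: "gneg \<nu>0 < 9" "gneg \<nu>0 \<noteq> \<nu>0" "gneg \<nu>0 \<noteq> 0" using gneg_facts[OF n0] by auto
  show qs: "q \<in> weyl_simplex" unfolding q_def weyl_simplex_def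
  proof (intro CollectI conjI allI impI)
    fix \<mu> show "0 \<le> (1 - e) * p \<mu> + e * rr g \<nu>0 \<mu>"
      using pn(1) rr_nonneg[OF gn] e ehalf by (intro add_nonneg_nonneg mult_nonneg_nonneg) auto
  next
    fix \<mu> :: nat assume "9 \<le> \<mu>" then show "(1 - e) * p \<mu> + e * rr g \<nu>0 \<mu> = 0"
      using pn(2) by (simp add: rr_def)
  next
    show "(\<Sum>\<mu><9. (1 - e) * p \<mu> + e * rr g \<nu>0 \<mu>) = 1"
      using rr_sum[OF n0] pn(3) by (simp add: sum.distrib sum_distrib_left[symmetric])
  qed
  define \<kappa> where "\<kappa> = 1 - e - e / (2 * \<rho>)"
  have k0: "0 < \<kappa>"
  proof -
    have ee: "e / (2 * \<rho>) * (2 * \<rho>) = e" using \<rho>0 by simp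
    have "\<kappa> * (2 * \<rho>) = (1 - e) * (2 * \<rho>) - e / (2 * \<rho>) * (2 * \<rho>)"
      unfolding \<kappa>_def by (simp only: left_diff_distrib)
    also have "\<dots> = 2 * \<rho> - e * (2 * \<rho> + 1)" unfolding ee by (simp add: algebra_simps)
    finally have "\<kappa> * (2 * \<rho>) \<ge> \<rho>" using eb by simp
    then have "0 < \<kappa> * (2 * \<rho>)" using \<rho>0 by simp
    then show ?thesis using \<rho>0 by (simp add: zero_less_mult_iff)
  qed
  have k1: "\<kappa> \<le> 1 - 3/2 * e"
  proof -
    have "e / 2 \<le> e / (2 * \<rho>)" using \<rho>0 e by (intro divide_left_mono) auto
    then show ?thesis unfolding \<kappa>_def by simp
  qed
  have lq: "lam q \<nu> = complex_of_real (1 - e) * lam p \<nu> + complex_of_real e * lam (rr g \<nu>0) \<nu>" for \<nu>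
    unfolding q_def by (rule lam_lin)
  have lq0: "lam q \<nu>0 = lam p \<nu>0 * complex_of_real \<kappa>"
  proof -
    have "lam q \<nu>0 = complex_of_real (1 - e) * lam p \<nu>0 + complex_of_real e * g"
      unfolding lq lam_rr[OF n0(1) n0(1)] using n0(2) gf(2) by simp
    also have "\<dots> = lam p \<nu>0 * complex_of_real \<kappa>"
    proof -
      have "complex_of_real e * g = - (lam p \<nu>0 * complex_of_real (e / (2 * \<rho>)))"
        unfolding g_def \<rho>_def[symmetric] by (simp add: of_real_divide)
      then show ?thesis unfolding \<kappa>_def by (simp add: algebra_simps of_real_diff)
    qed
    finally show ?thesis .
  qed
  have cq0: "cmod (lam q \<nu>0) = \<rho> * \<kappa>" unfolding lq0 norm_mult \<rho>_def using k0 by simp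
  have cqg: "cmod (lam q (gneg \<nu>0)) = \<rho> * \<kappa>" unfolding lam_gneg[OF n0(1)] using cq0 by simp
  have cpg: "cmod (lam p (gneg \<nu>0)) = \<rho>" unfolding lam_gneg[OF n0(1)] \<rho>_def by simp
  have "lam (rr g \<nu>0) 0 = 1" using lam_rr[OF n0(1), of 0] n0(2) gf(3) by simp
  then have cq00: "cmod (lam q 0) = 1" unfolding lq lp0 by simp
  define R where "R = {..<9::nat} - {0, \<nu>0, gneg \<nu>0}"
  have cR: "card R = 6" unfolding R_def using card_R n0 gf by auto
  have qR: "(\<Prod>\<nu>\<in>R. cmod (lam q \<nu>)) = (1 - e) ^ 6 * (\<Prod>\<nu>\<in>R. cmod (lam p \<nu>))"
  proof -
    have "(\<Prod>\<nu>\<in>R. cmod (lam q \<nu>)) = (\<Prod>\<nu>\<in>R. (1 - e) * cmod (lam p \<nu>))"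
    proof (intro prod.cong refl)
      fix \<nu> assume "\<nu> \<in> R"
      then have "\<nu> < 9" "\<nu> \<noteq> 0" "\<nu> \<noteq> \<nu>0" "\<nu> \<noteq> gneg \<nu>0" unfolding R_def by auto
      then have "lam (rr g \<nu>0) \<nu> = 0" using lam_rr[OF n0(1), of \<nu>] by simp
      then have lqn: "lam q \<nu> = complex_of_real (1 - e) * lam p \<nu>" unfolding lq by simp
      have c: "cmod (complex_of_real (1 - e) * lam p \<nu>) = (1 - e) * cmod (lam p \<nu>)"
        using ehalf by (simp only: norm_mult norm_of_real abs_of_nonneg)
      show "cmod (lam q \<nu>) = (1 - e) * cmod (lam p \<nu>)" unfolding lqn by (rule c)
    qed
    also have "\<dots> = (1 - e) ^ 6 * (\<Prod>\<nu>\<in>R. cmod (lam p \<nu>))" by (simp add: prod.distrib cR)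
    finally show ?thesis .
  qed
  have split: "(\<Prod>\<nu><9. cmod (lam r \<nu>)) = cmod (lam r 0) * cmod (lam r \<nu>0) * cmod (lam r (gneg \<nu>0)) * (\<Prod>\<nu>\<in>R. cmod (lam r \<nu>))" for r
    unfolding R_def by (rule prod9_split) (use n0 gf in auto)
  have pR: "(\<Prod>\<nu>\<in>R. cmod (lam p \<nu>)) = \<rho> ^ 4"
  proof -
    have "1 * \<rho> * \<rho> * (\<Prod>\<nu>\<in>R. cmod (lam p \<nu>)) = \<rho> ^ 6"
      using eqp unfolding split lp0 cpg \<rho>_def[symmetric] by simp
    moreover have "\<rho> ^ 6 = \<rho> * \<rho> * \<rho> ^ 4" by (simp add: power_add[symmetric] power2_eq_square[symmetric] mult.assoc)
    ultimately have "\<rho> * \<rho> * (\<Prod>\<nu>\<in>R. cmod (lam p \<nu>)) = \<rho> * \<rho> * \<rho> ^ 4" by simp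
    then show ?thesis using \<rho>0 by simp
  qed
  show "q \<notin> AQ3"
  proof
    assume "q \<in> AQ3"
    from NEC[OF this n0(1)] have "1 * (\<rho> * \<kappa>) * (\<rho> * \<kappa>) * ((1 - e) ^ 6 * \<rho> ^ 4) \<le> (\<rho> * \<kappa>) ^ 6"
      unfolding split cq0 cqg cq00 qR pR .
    then have "(\<rho> ^ 6 * \<kappa> ^ 2) * (1 - e) ^ 6 \<le> (\<rho> ^ 6 * \<kappa> ^ 2) * \<kappa> ^ 4"
      by (simp add: algebra_simps eval_nat_numeral)
    moreover have "0 < \<rho> ^ 6 * \<kappa> ^ 2" using \<rho>0 k0 by simp
    ultimately have "(1 - e) ^ 6 \<le> \<kappa> ^ 4" using mult_le_cancel_left_pos by blast
    moreover have "\<kappa> ^ 4 < (1 - e) ^ 6" by (rule kappa_ineq[OF e(1) ehalf k0 k1])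
    ultimately show False by simp
  qed
qed


lemma not_interior:
  assumes p: "p \<in> weyl_simplex" and n0: "\<nu>0 < 9" "\<nu>0 \<noteq> 0"
    and eqp: "(\<Prod>\<nu><9. cmod (lam p \<nu>)) = cmod (lam p \<nu>0) ^ 6"
    and rho: "0 < cmod (lam p \<nu>0)" "cmod (lam p \<nu>0) \<le> 1"
  shows "p \<notin> (top_of_set weyl_simplex) interior_of AQ3"
proof
  assume "p \<in> (top_of_set weyl_simplex) interior_of AQ3"
  then obtain T where T: "openin (top_of_set weyl_simplex) T" "p \<in> T" "T \<subseteq> AQ3"
    unfolding interior_of_def by blast
  then obtain U where U: "open U" "T = weyl_simplex \<inter> U" unfolding openin_open by blast
  define \<rho> where "\<rho> = cmod (lam p \<nu>0)"
  define g where "g = - lam p \<nu>0 / complex_of_real (2 * cmod (lam p \<nu>0))"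
  define G where "G = (\<lambda>e::real. \<lambda>\<mu>. (1 - e) * p \<mu> + e * rr g \<nu>0 \<mu>)"
  have "continuous_on UNIV G" unfolding G_def
    by (intro continuous_on_coordinatewise_then_product continuous_intros)
  then have oG: "open (G -` U)" using continuous_on_open_vimage[OF open_UNIV] U(1) by auto
  have "G 0 = p" unfolding G_def by simp
  then have "0 \<in> G -` U" using T(2) U(2) by auto
  then obtain \<delta> where \<delta>: "\<delta> > 0" "ball 0 \<delta> \<subseteq> G -` U" using oG open_contains_ball by blast
  define e where "e = min (\<delta>/2) (\<rho> / (2 * \<rho> + 1))"
  have "0 < \<rho> / (2 * \<rho> + 1)" using rho unfolding \<rho>_def by (intro divide_pos_pos) (auto intro: add_nonneg_pos)
  then have e0: "0 < e" unfolding e_def using \<delta>(1) by auto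
  have e1: "e \<le> cmod (lam p \<nu>0) / (2 * cmod (lam p \<nu>0) + 1)" unfolding e_def \<rho>_def by simp
  have "e \<in> ball 0 \<delta>" using e0 \<delta>(1) unfolding e_def by (simp add: dist_real_def)
  then have "G e \<in> U" using \<delta>(2) by auto
  moreover have "G e \<in> weyl_simplex" "G e \<notin> AQ3"
    using perturb_not_AQ3[OF p n0 eqp rho e0 e1] unfolding G_def g_def by auto
  ultimately show False using T(3) U(2) by auto
qed

theorem proposition7:
  fixes a b \<alpha> \<beta> :: nat and ta tb t\<alpha> t\<beta> :: real
  assumes "a \<in> {1..8}" "b \<in> {1..8}" "\<alpha> \<in> {1..8}" "\<beta> \<in> {1..8}"
    and "distinct [a, b, \<alpha>, \<beta>]"
    and "\<exists>z. cmod z = 1 \<and> meq 3 (Weyl a) (\<lambda>i j. z * adj (Weyl b) i j)"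
    and "\<exists>z. cmod z = 1 \<and> meq 3 (Weyl \<alpha>) (\<lambda>i j. z * adj (Weyl \<beta>) i j)"
    and "0 \<le> ta" "0 \<le> tb" "0 \<le> t\<alpha>" "0 \<le> t\<beta>"
  shows "\<exists>p. meq 9 (weyl_channel p)
               (mexp 9 (\<lambda>r c. complex_of_real ta * Lgen a r c + complex_of_real tb * Lgen b r c
                             + complex_of_real t\<alpha> * Lgen \<alpha> r c + complex_of_real t\<beta> * Lgen \<beta> r c))
           \<and> p \<in> AQ3_boundary
           \<and> (\<exists>\<sigma> :: nat \<Rightarrow> nat \<times> nat. bij_betw \<sigma> {0..<9} ({1,2,3} \<times> {1,2,3})
                \<and> (\<forall>\<mu><9. p \<mu> = fprob (fst (\<sigma> \<mu>)) ta tb * fprob (snd (\<sigma> \<mu>)) t\<alpha> t\<beta>))"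
proof -
  have a9: "a < 9" and b9: "b < 9" and al9: "\<alpha> < 9" and be9: "\<beta> < 9" using assms(1-4) by auto
  have cb: "\<And>\<nu>. \<nu> < 9 \<Longrightarrow> chi b \<nu> = cnj (chi a \<nu>)" by (rule chi_conj_pair[OF a9 b9 assms(6)])
  have cbe: "\<And>\<nu>. \<nu> < 9 \<Longrightarrow> chi \<beta> \<nu> = cnj (chi \<alpha> \<nu>)" by (rule chi_conj_pair[OF al9 be9 assms(7)])
  have ds: "a \<noteq> b" "a \<noteq> \<alpha>" "a \<noteq> \<beta>" "b \<noteq> \<alpha>" "b \<noteq> \<beta>" "\<alpha> \<noteq> \<beta>" using assms(5) by auto
  have d: "dd a \<alpha> \<noteq> 0" by (rule indep[OF assms(1,2,3)]) (use ds cb in auto)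
  define p where "p = pp a \<alpha> ta tb t\<alpha> t\<beta>"
  define M where "M = (\<lambda>r c. complex_of_real ta * Lgen a r c + complex_of_real tb * Lgen b r c
                             + complex_of_real t\<alpha> * Lgen \<alpha> r c + complex_of_real t\<beta> * Lgen \<beta> r c)"
  have meqp: "meq 9 (weyl_channel p) (mexp 9 M)"
    unfolding p_def M_def by (rule part1[OF a9 b9 al9 be9 d cb cbe])
  have ps: "p \<in> weyl_simplex" unfolding p_def by (rule pp_simplex[OF a9 al9 d assms(8-11)])
  define tp where "tp = (\<lambda>\<mu>. if \<mu> = a then ta else if \<mu> = b then tb else if \<mu> = \<alpha> then t\<alpha> else if \<mu> = \<beta> then t\<beta> else (0::real))"
  have tp0: "\<forall>\<mu>\<in>{1..8}. 0 \<le> tp \<mu>" unfolding tp_def using assms(8-11) by auto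
  have gen: "gen_comb tp = M"
  proof (intro ext)
    fix r c
    have sub: "{a, b, \<alpha>, \<beta>} \<subseteq> {1..8}" using assms(1-4) by auto
    have "gen_comb tp r c = (\<Sum>\<mu>\<in>{1..8} - {a, b, \<alpha>, \<beta>}. complex_of_real (tp \<mu>) * Lgen \<mu> r c)
        + (\<Sum>\<mu>\<in>{a, b, \<alpha>, \<beta>}. complex_of_real (tp \<mu>) * Lgen \<mu> r c)"
      unfolding gen_comb_def by (rule sum.subset_diff[OF sub]) simp
    also have "(\<Sum>\<mu>\<in>{1..8} - {a, b, \<alpha>, \<beta>}. complex_of_real (tp \<mu>) * Lgen \<mu> r c) = 0"
      by (intro sum.neutral) (auto simp: tp_def)
    also have "(\<Sum>\<mu>\<in>{a, b, \<alpha>, \<beta>}. complex_of_real (tp \<mu>) * Lgen \<mu> r c) = M r c"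
      unfolding M_def using ds by (simp add: tp_def add.assoc)
    finally show "gen_comb tp r c = M r c" by simp
  qed
  have pAQ: "p \<in> AQ3" unfolding AQ3_def using ps tp0 meqp gen by auto
  define k1 where "k1 = a div 3"
  define l1 where "l1 = a mod 3"
  define k2 where "k2 = \<alpha> div 3"
  define l2 where "l2 = \<alpha> mod 3"
  define kn where "kn = (((k1*l2 + 2*k2*l1) mod 3) * (k1 + 2*k2)) mod 3"
  define lnu where "lnu = (((k1*l2 + 2*k2*l1) mod 3) * (l1 + 2*l2)) mod 3"
  define \<nu>0 where "\<nu>0 = 3 * kn + lnu"
  have kl: "k1 < 3" "l1 < 3" "k2 < 3" "l2 < 3" unfolding k1_def l1_def k2_def l2_def using a9 al9 by auto
  have d': "(k1*l2 + 2*k2*l1) mod 3 \<noteq> 0" using d unfolding dd_def k1_def l1_def k2_def l2_def .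
  note NA = nustar_arith[OF kl d', folded kn_def lnu_def]
  have n9: "\<nu>0 < 9" unfolding \<nu>0_def kn_def lnu_def by simp
  have ndm: "\<nu>0 div 3 = kn" "\<nu>0 mod 3 = lnu" unfolding \<nu>0_def kn_def lnu_def by auto
  have ca: "chi a \<nu>0 \<noteq> 1"
    unfolding chi_def omega_pow_eq1_iff ndm using NA unfolding k1_def l1_def by simp
  have cal: "chi \<alpha> \<nu>0 \<noteq> 1"
    unfolding chi_def omega_pow_eq1_iff ndm using NA unfolding k2_def l2_def by simp
  have cbb: "chi b \<nu>0 \<noteq> 1" using cb[OF n9] ca by auto
  have cbeb: "chi \<beta> \<nu>0 \<noteq> 1" using cbe[OF n9] cal by auto
  have n0: "\<nu>0 \<noteq> 0" using ca chi0_right by metis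
  have meqt: "meq 9 (weyl_channel p) (mexp 9 (gen_comb tp))" using meqp gen by simp
  have six: "6 * Re (ell tp \<nu>0) = -9 * (\<Sum>\<mu>\<in>{1..8}. tp \<mu>)"
    by (rule six_Re_ell_eq) (auto simp: tp_def ca cal cbb cbeb)
  have eqp: "(\<Prod>\<nu><9. cmod (lam p \<nu>)) = cmod (lam p \<nu>0) ^ 6"
    unfolding prod_lam_exp[OF meqt] prod_lam_exp(2)[OF meqt n9] six ..
  have cl: "cmod (lam p \<nu>0) = exp (Re (ell tp \<nu>0))" using EIG[OF meqt n9] by simp
  have "Re (ell tp \<nu>0) \<le> 0"
    unfolding Re_ell using tp0 Re_chi_le by (intro sum_nonpos mult_nonneg_nonpos) auto
  then have rho: "0 < cmod (lam p \<nu>0)" "cmod (lam p \<nu>0) \<le> 1" unfolding cl by auto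
  have bd: "p \<in> AQ3_boundary"
  proof -
    have "AQ3 \<subseteq> topspace (top_of_set weyl_simplex)" unfolding AQ3_def by auto
    then have "p \<in> (top_of_set weyl_simplex) closure_of AQ3" using closure_of_subset pAQ by blast
    then show ?thesis unfolding AQ3_boundary_def frontier_of_def
      using not_interior[OF ps n9 n0 eqp rho] by blast
  qed
  have sig: "\<forall>\<mu><9. p \<mu> = fprob (fst (sgm a \<alpha> \<mu>)) ta tb * fprob (snd (sgm a \<alpha> \<mu>)) t\<alpha> t\<beta>"
    unfolding p_def pp_def sgm_def by simp
  show ?thesis
    using meqp bd sgm_bij[OF a9 al9 d] sig unfolding M_def by blast
qed


end
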